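(* Let $\tau=\{T;\mathfrak N,\mathfrak N,\mathfrak H\}$ be a pqs-system with $T=\begin{pmatrix}D&C\\ B&A\end{pmatrix}$ where $A$ is a selfadjoint contraction in $\mathfrak H$, $B=D_AK^*$, $C=KD_A$, $D=-KAK^*+D_{K^*}XD_{K^*}$ for some contractions $K\in\mathbf L(\mathfrak D_A,\mathfrak N)$ and $X\in\mathbf L(\mathfrak D_{K^*})$. Let $\mathfrak H^s=\overline{\rm span}\{A^nK^*\mathfrak N:n\ge0\}$ and let $\tau_s=\{T_s;\mathfrak N,\mathfrak N,\mathfrak H^s\}$ with $T_s=\begin{pmatrix}D&C\restriction\mathfrak H^s\\ B&A\restriction\mathfrak H^s\end{pmatrix}$. Then $\tau_s$ is a minimal pqs-system and its transfer function coincides with that of $\tau$. Moreover, $\tau$ is minimal if and only if (i) $\|Af\|<\|f\|$ for all $f\in\mathfrak H\setminus\{0\}$ and (ii) $\mathfrak H^s=\mathfrak H$. In this case $\tau$ is strongly stable and strongly co-stable.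
   Context: A system $\tau=\{T;\mathfrak N,\mathfrak N,\mathfrak H\}$ has bounded $T=\begin{pmatrix}D&C\\ B&A\end{pmatrix}:\mathfrak N\oplus\mathfrak H\to\mathfrak N\oplus\mathfrak H$; transfer function $\Theta(\lambda)=D+\lambda C(I-\lambda A)^{-1}B$, $\lambda\in\mathbb D$; minimal means $\overline{\rm span}\{A^nB\mathfrak N\}=\mathfrak H=\overline{\rm span}\{A^{*n}C^*\mathfrak N\}$. A passive quasi-selfadjoint system (pqs-system) is one where $T$ is a contraction and ${\rm ran}(T-T^* )\subset\mathfrak N$ (equivalently $A=A^*$, $C=B^*$). $D_Y=(I-Y^*Y)^{1/2}$, $\mathfrak D_Y=\overline{\rm ran}\,D_Y$. Strongly stable: $A^n\to0$ strongly; strongly co-stable: $A^{*n}\to0$ strongly. *)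

theory Defs
  imports "HOL-Analysis.Analysis"
begin

text \<open>A complex Hilbert space is
encoded as a real Hilbert space (type class real_inner + complete_space) together with an
orthogonal map J with J (J x) = - x (multiplication by the imaginary unit).\<close>

definition cstruct :: "('a::real_inner \<Rightarrow> 'a) \<Rightarrow> bool" where
  "cstruct J \<longleftrightarrow> bounded_linear J \<and> (\<forall>x. J (J x) = - x) \<and> (\<forall>x y. inner (J x) (J y) = inner x y)"

definition csmul :: "('a::real_vector \<Rightarrow> 'a) \<Rightarrow> complex \<Rightarrow> 'a \<Rightarrow> 'a" where
  "csmul J z x = Re z *\<^sub>R x + Im z *\<^sub>R J x"

text \<open>complex inner product (linear in the first argument)\<close>
definition cinner :: "('a::real_inner \<Rightarrow> 'a) \<Rightarrow> 'a \<Rightarrow> 'a \<Rightarrow> complex" where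
  "cinner J x y = Complex (inner x y) (inner x (J y))"

definition cspan :: "('a::real_vector \<Rightarrow> 'a) \<Rightarrow> 'a set \<Rightarrow> 'a set" where
  "cspan J X = span (X \<union> J ` X)"

definition clinear_op :: "('a::real_normed_vector \<Rightarrow> 'a) \<Rightarrow> ('b::real_normed_vector \<Rightarrow> 'b) \<Rightarrow> ('a \<Rightarrow> 'b) \<Rightarrow> bool" where
  "clinear_op J1 J2 f \<longleftrightarrow> bounded_linear f \<and> (\<forall>x. f (J1 x) = J2 (f x))"

definition adj :: "('a::real_inner \<Rightarrow> 'a) \<Rightarrow> ('b::real_inner \<Rightarrow> 'b) \<Rightarrow> ('a \<Rightarrow> 'b) \<Rightarrow> ('b \<Rightarrow> 'a)" where
  "adj J1 J2 Y = (THE G. clinear_op J2 J1 G \<and> (\<forall>x y. cinner J2 (Y x) y = cinner J1 x (G y)))"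

definition cpositive :: "('a::real_inner \<Rightarrow> 'a) \<Rightarrow> ('a \<Rightarrow> 'a) \<Rightarrow> bool" where
  "cpositive J R \<longleftrightarrow> clinear_op J J R \<and> (\<forall>x. Im (cinner J (R x) x) = 0 \<and> Re (cinner J (R x) x) \<ge> 0)"

definition op_sqrt :: "('a::real_inner \<Rightarrow> 'a) \<Rightarrow> ('a \<Rightarrow> 'a) \<Rightarrow> ('a \<Rightarrow> 'a)" where
  "op_sqrt J P = (THE R. cpositive J R \<and> R \<circ> R = P)"

definition defect :: "('a::real_inner \<Rightarrow> 'a) \<Rightarrow> ('b::real_inner \<Rightarrow> 'b) \<Rightarrow> ('a \<Rightarrow> 'b) \<Rightarrow> ('a \<Rightarrow> 'a)" where
  "defect J1 J2 Y = op_sqrt J1 (\<lambda>x. x - adj J1 J2 Y (Y x))"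

definition defect_space :: "('a::real_inner \<Rightarrow> 'a) \<Rightarrow> ('b::real_inner \<Rightarrow> 'b) \<Rightarrow> ('a \<Rightarrow> 'b) \<Rightarrow> 'a set" where
  "defect_space J1 J2 Y = closure (range (defect J1 J2 Y))"

text \<open>A system tau = {T; N, N, S} with T = [[D, C], [B, A]] : N \<oplus> S \<rightarrow> N \<oplus> S, where the state
space S is a closed (complex) subspace of the ambient Hilbert space 'h.  The operators are
given on the ambient spaces; only their restrictions to S matter (C|S, A|S).\<close>

definition csubspace :: "('a::real_normed_vector \<Rightarrow> 'a) \<Rightarrow> 'a set \<Rightarrow> bool" where
  "csubspace J S \<longleftrightarrow> subspace S \<and> closed S \<and> J ` S \<subseteq> S"

definition is_system ::
  "('n::real_inner \<Rightarrow> 'n) \<Rightarrow> ('h::real_inner \<Rightarrow> 'h) \<Rightarrow> 'h set \<Rightarrow>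
   ('n \<Rightarrow> 'n) \<Rightarrow> ('h \<Rightarrow> 'n) \<Rightarrow> ('n \<Rightarrow> 'h) \<Rightarrow> ('h \<Rightarrow> 'h) \<Rightarrow> bool" where
  "is_system JN JH S D C B A \<longleftrightarrow> csubspace JH S \<and>
     clinear_op JN JN D \<and> clinear_op JH JN C \<and> clinear_op JN JH B \<and> clinear_op JH JH A \<and>
     range B \<subseteq> S \<and> A ` S \<subseteq> S"

text \<open>passive quasi-selfadjoint system: T is a contraction on N \<oplus> S and ran(T - T^*) \<subseteq> N,
equivalently A|S is selfadjoint and C|S = B^* (B viewed as an operator N \<rightarrow> S)\<close>
definition pqs_system ::
  "('n::real_inner \<Rightarrow> 'n) \<Rightarrow> ('h::real_inner \<Rightarrow> 'h) \<Rightarrow> 'h set \<Rightarrow>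
   ('n \<Rightarrow> 'n) \<Rightarrow> ('h \<Rightarrow> 'n) \<Rightarrow> ('n \<Rightarrow> 'h) \<Rightarrow> ('h \<Rightarrow> 'h) \<Rightarrow> bool" where
  "pqs_system JN JH S D C B A \<longleftrightarrow> is_system JN JH S D C B A \<and>
     (\<forall>n. \<forall>h\<in>S. norm (D n + C h, B n + A h) \<le> norm (n, h)) \<and>
     (\<forall>x\<in>S. \<forall>y\<in>S. cinner JH (A x) y = cinner JH x (A y)) \<and>
     (\<forall>h\<in>S. \<forall>n. cinner JN (C h) n = cinner JH h (B n))"

text \<open>transfer function Theta(z) = D + z C (I - z A|S)^{-1} B, for |z| < 1\<close>
definition transfer ::
  "('n::real_inner \<Rightarrow> 'n) \<Rightarrow> ('h::real_inner \<Rightarrow> 'h) \<Rightarrow> 'h set \<Rightarrow>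
   ('n \<Rightarrow> 'n) \<Rightarrow> ('h \<Rightarrow> 'n) \<Rightarrow> ('n \<Rightarrow> 'h) \<Rightarrow> ('h \<Rightarrow> 'h) \<Rightarrow> complex \<Rightarrow> 'n \<Rightarrow> 'n" where
  "transfer JN JH S D C B A z n =
     D n + csmul JN z (C (THE h. h \<in> S \<and> h - csmul JH z (A h) = B n))"

definition state_adjoints ::
  "('n::real_inner \<Rightarrow> 'n) \<Rightarrow> ('h::real_inner \<Rightarrow> 'h) \<Rightarrow> 'h set \<Rightarrow>
   ('h \<Rightarrow> 'n) \<Rightarrow> ('h \<Rightarrow> 'h) \<Rightarrow> ('n \<Rightarrow> 'h) \<Rightarrow> ('h \<Rightarrow> 'h) \<Rightarrow> bool" where
  "state_adjoints JN JH S C A C' A' \<longleftrightarrow>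
     A' ` S \<subseteq> S \<and> range C' \<subseteq> S \<and>
     (\<forall>x\<in>S. \<forall>y\<in>S. cinner JH (A x) y = cinner JH x (A' y)) \<and>
     (\<forall>x\<in>S. \<forall>n. cinner JN (C x) n = cinner JH x (C' n))"

definition minimal_system ::
  "('n::real_inner \<Rightarrow> 'n) \<Rightarrow> ('h::real_inner \<Rightarrow> 'h) \<Rightarrow> 'h set \<Rightarrow>
   ('n \<Rightarrow> 'n) \<Rightarrow> ('h \<Rightarrow> 'n) \<Rightarrow> ('n \<Rightarrow> 'h) \<Rightarrow> ('h \<Rightarrow> 'h) \<Rightarrow> bool" where
  "minimal_system JN JH S D C B A \<longleftrightarrow>
     closure (cspan JH (\<Union>k. (A ^^ k) ` range B)) = S \<and>
     (\<exists>C' A'. state_adjoints JN JH S C A C' A' \<and>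
        closure (cspan JH (\<Union>k. (A' ^^ k) ` range C')) = S)"

definition strongly_stable :: "'h set \<Rightarrow> ('h::real_normed_vector \<Rightarrow> 'h) \<Rightarrow> bool" where
  "strongly_stable S A \<longleftrightarrow> (\<forall>f\<in>S. (\<lambda>k. (A ^^ k) f) \<longlonglongrightarrow> 0)"

definition strongly_costable ::
  "('n::real_inner \<Rightarrow> 'n) \<Rightarrow> ('h::real_inner \<Rightarrow> 'h) \<Rightarrow> 'h set \<Rightarrow> ('h \<Rightarrow> 'n) \<Rightarrow> ('h \<Rightarrow> 'h) \<Rightarrow> bool" where
  "strongly_costable JN JH S C A \<longleftrightarrow>
     (\<exists>C' A'. state_adjoints JN JH S C A C' A' \<and> (\<forall>f\<in>S. (\<lambda>k. (A' ^^ k) f) \<longlonglongrightarrow> 0))"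

end

theory Submission
  imports Defs
begin


lemma cstruct_linear: "cstruct J \<Longrightarrow> bounded_linear J"
  by (simp add: cstruct_def)

lemma cstruct_JJ: "cstruct J \<Longrightarrow> J (J x) = - x"
  by (simp add: cstruct_def)

lemma cstruct_inner: "cstruct J \<Longrightarrow> inner (J x) (J y) = inner x y"
  by (simp add: cstruct_def)

lemma cstruct_inner_left: "cstruct J \<Longrightarrow> inner (J u) v = - inner u (J v)"
proof -
  assume J: "cstruct J"
  have "inner (J u) (J (J v)) = inner u (J v)" using cstruct_inner[OF J] .
  moreover have "J (J v) = - v" using cstruct_JJ[OF J] .
  ultimately show ?thesis by simp
qed

lemma cstruct_inner_self: "cstruct J \<Longrightarrow> inner x (J x) = 0"
  using cstruct_inner_left[of J x x] by (simp add: inner_commute)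

lemma cstruct_norm: "cstruct J \<Longrightarrow> norm (J x) = norm x"
  using cstruct_inner[of J x x] by (simp add: norm_eq_sqrt_inner)

lemma cinner_eq: "cinner J a b = cinner J' c d \<longleftrightarrow> inner a b = inner c d \<and> inner a (J b) = inner c (J' d)"
  by (simp add: cinner_def complex_eq_iff)

section \<open>Series in complete normed spaces\<close>

lemma summable_Cauchy_complete:
  fixes f :: "nat \<Rightarrow> 'a::{real_normed_vector,complete_space}"
  assumes r: "\<forall>e>0. \<exists>N. \<forall>m\<ge>N. \<forall>n. norm (sum f {m..<n}) < e"
  shows "summable f"
  unfolding summable_iff_convergent Cauchy_convergent_iff [symmetric] Cauchy_iff
  proof clarify
    fix e :: real
    assume "0 < e"
    with r obtain N where N: "\<And>m n. m \<ge> N \<Longrightarrow> norm (sum f {m..<n}) < e"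
      by blast
    have "norm (sum f {..<m} - sum f {..<n}) < e" if "m\<ge>N" "n\<ge>N" for m n
    proof (cases m n rule: linorder_class.le_cases)
      assume "m \<le> n"
      then show ?thesis
        by (metis N finite_lessThan lessThan_minus_lessThan lessThan_subset_iff norm_minus_commute sum_diff \<open>m\<ge>N\<close>)
    next
      assume "n \<le> m"
      then show ?thesis
        by (metis N finite_lessThan lessThan_minus_lessThan lessThan_subset_iff sum_diff \<open>n\<ge>N\<close>)
    qed
    then show "\<exists>M. \<forall>m\<ge>M. \<forall>n\<ge>M. norm (sum f {..<m} - sum f {..<n}) < e"
      by blast
  qed

lemma summable_norm_cancel':
  fixes f :: "nat \<Rightarrow> 'a::{real_normed_vector,complete_space}"
  shows "summable (\<lambda>n. norm (f n)) \<Longrightarrow> summable f"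
proof -
  assume h: "summable (\<lambda>n. norm (f n))"
  show ?thesis
  proof (rule summable_Cauchy_complete, intro allI impI)
    fix e :: real assume "e > 0"
    with h obtain N where N: "\<And>m n. m \<ge> N \<Longrightarrow> norm (sum (\<lambda>n. norm (f n)) {m..<n}) < e"
      unfolding summable_Cauchy by blast
    have "norm (sum f {m..<n}) < e" if "m \<ge> N" for m n
    proof -
      have "norm (sum f {m..<n}) \<le> sum (\<lambda>n. norm (f n)) {m..<n}" by (rule norm_sum)
      also have "\<dots> \<le> norm (sum (\<lambda>n. norm (f n)) {m..<n})" by simp
      also have "\<dots> < e" using N[OF that] .
      finally show ?thesis .
    qed
    thus "\<exists>N. \<forall>m\<ge>N. \<forall>n. norm (sum f {m..<n}) < e" by blast
  qed
qed

lemma summable_norm':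
  fixes f :: "nat \<Rightarrow> 'a::{real_normed_vector,complete_space}"
  shows "summable (\<lambda>n. norm (f n)) \<Longrightarrow> norm (suminf f) \<le> (\<Sum>n. norm (f n))"
proof -
  assume h: "summable (\<lambda>n. norm (f n))"
  have a: "(\<lambda>n. norm (\<Sum>i<n. f i)) \<longlonglongrightarrow> norm (suminf f)"
    by (intro tendsto_norm summable_LIMSEQ) (rule summable_norm_cancel'[OF h])
  have b: "(\<lambda>n. \<Sum>i<n. norm (f i)) \<longlonglongrightarrow> (\<Sum>n. norm (f n))"
    by (rule summable_LIMSEQ[OF h])
  show ?thesis by (rule LIMSEQ_le[OF a b]) (auto intro: norm_sum)
qed

lemma summable_comparison_complete:
  fixes f :: "nat \<Rightarrow> 'a::{real_normed_vector,complete_space}"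
  assumes "\<And>n. norm (f n) \<le> g n" "summable g"
  shows "summable f"
  apply (rule summable_norm_cancel')
  apply (rule summable_comparison_test[OF _ assms(2)])
  using assms(1) by auto

section \<open>Projection theorem\<close>

lemma quad_aux: "(c::real) \<ge> 0 \<Longrightarrow> t = a / (c+1) \<Longrightarrow> - 2 * t * a + t^2 * c = - (a^2 * (c + 2)) / (c+1)^2"
  apply (subgoal_tac "c + 1 \<noteq> 0")
   apply (simp add: power2_eq_square divide_simps)
   apply (erule subst) apply algebra
  apply simp
  done

lemma parallelogram:
  fixes a b :: "'a::real_inner"
  shows "norm (a + b)^2 + norm (a - b)^2 = 2 * norm a ^2 + 2 * norm b ^2"
  by (simp add: power2_norm_eq_inner inner_add inner_diff inner_commute algebra_simps)

lemma projection_exists: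
  fixes M :: "'a::{real_inner,complete_space} set"
  assumes sub: "subspace M" and cl: "closed M"
  shows "\<exists>m\<in>M. \<forall>y\<in>M. inner (x - m) y = 0"
proof -
  define d where "d = infdist x M"
  have ne: "M \<noteq> {}" using subspace_0[OF sub] by blast
  have d0: "d \<ge> 0" by (simp add: d_def infdist_nonneg)
  have dle: "d \<le> dist x m" if "m \<in> M" for m using infdist_le[OF that] by (simp add: d_def)
  have "\<forall>k::nat. \<exists>m\<in>M. dist x m < d + 1 / (real k + 1)"
  proof
    fix k :: nat
    have "0 < 1 / (real k + 1)" by simp
    have "(INF a\<in>M. dist x a) < d + 1 / (real k + 1)"
      using infdist_notempty[OF ne, of x] \<open>0 < 1 / (real k + 1)\<close> by (simp add: d_def)
    moreover have "bdd_below ((\<lambda>a. dist x a) ` M)" by (rule bdd_belowI[of _ 0]) auto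
    ultimately show "\<exists>m\<in>M. dist x m < d + 1 / (real k + 1)"
      using cINF_less_iff[OF ne] by blast
  qed
  then obtain m where mM: "\<And>k. m k \<in> M" and md: "\<And>k. dist x (m k) < d + 1 / (real k + 1)"
    by metis
  define e where "e k = (2 * d + 1) / (real k + 1)" for k :: nat
  have sq: "norm (x - m k)^2 \<le> d^2 + e k" for k
  proof -
    have a: "norm (x - m k) < d + 1 / (real k + 1)" using md[of k] by (simp add: dist_norm)
    have b: "norm (x - m k) \<ge> 0" by simp
    have "norm (x - m k)^2 \<le> (d + 1 / (real k + 1))^2"
      using a b by (intro power_mono) auto
    also have "\<dots> = d^2 + 2 * d / (real k + 1) + 1 / (real k + 1)^2"
      by (simp add: power2_sum power_divide)
    also have "1 / (real k + 1)^2 \<le> 1 / (real k + 1)"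
      by (rule divide_left_mono) (auto simp: power2_eq_square)
    finally show ?thesis unfolding e_def by (simp add: add_divide_distrib)
  qed
  have diff: "norm (m i - m j)^2 \<le> 2 * e i + 2 * e j" for i j
  proof -
    have mid: "(1/2) *\<^sub>R (m i + m j) \<in> M"
      using mM sub by (simp add: subspace_add subspace_scale)
    have "d \<le> norm (x - (1/2) *\<^sub>R (m i + m j))" using dle[OF mid] by (simp add: dist_norm)
    hence "d^2 \<le> norm (x - (1/2) *\<^sub>R (m i + m j))^2" using d0 by (simp add: power_mono)
    moreover have "(x - m i) + (x - m j) = 2 *\<^sub>R (x - (1/2) *\<^sub>R (m i + m j))"
      by (simp add: algebra_simps scaleR_2)
    hence "norm ((x - m i) + (x - m j))^2 = 4 * norm (x - (1/2) *\<^sub>R (m i + m j))^2"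
      by (simp add: power2_eq_square)
    moreover have "(x - m i) - (x - m j) = m j - m i" by simp
    moreover note parallelogram[of "x - m i" "x - m j"] sq[of i] sq[of j]
    ultimately show ?thesis by (simp add: norm_minus_commute)
  qed
  have e0: "e \<longlonglongrightarrow> 0"
  proof -
    have "(\<lambda>k. 1 / (real k + 1)) \<longlonglongrightarrow> 0"
      using LIMSEQ_inverse_real_of_nat by (simp add: inverse_eq_divide add.commute)
    from tendsto_mult_right_zero[OF this, of "2*d+1"] show ?thesis
      by (simp add: e_def[abs_def])
  qed
  have "Cauchy m"
  proof (rule metric_CauchyI)
    fix \<epsilon> :: real assume "\<epsilon> > 0"
    hence "\<epsilon>^2/4 > 0" by simp
    with e0 obtain N where N: "\<And>n. n \<ge> N \<Longrightarrow> norm (e n) < \<epsilon>^2/4"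
      unfolding LIMSEQ_def dist_real_def by (metis diff_zero real_norm_def)
    have epos: "e n \<ge> 0" for n using d0 by (simp add: e_def)
    show "\<exists>M. \<forall>i\<ge>M. \<forall>j\<ge>M. dist (m i) (m j) < \<epsilon>"
    proof (intro exI allI impI)
      fix i j assume "i \<ge> N" "j \<ge> N"
      hence "e i < \<epsilon>^2/4" "e j < \<epsilon>^2/4" using N[of i] N[of j] epos[of i] epos[of j] by (simp_all add: abs_of_nonneg)
      hence "norm (m i - m j)^2 < \<epsilon>^2" using diff[of i j] by linarith
      hence "norm (m i - m j) < \<epsilon>" using \<open>\<epsilon> > 0\<close> by (simp add: power_less_imp_less_base)
      thus "dist (m i) (m j) < \<epsilon>" by (simp add: dist_norm)
    qed
  qed
  then obtain m0 where lim: "m \<longlonglongrightarrow> m0"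
    using Cauchy_convergent_iff convergent_def by blast
  have m0M: "m0 \<in> M" using closed_sequentially[OF cl] mM lim by blast
  have "(\<lambda>k. norm (x - m k)^2) \<longlonglongrightarrow> norm (x - m0)^2"
    by (intro tendsto_intros lim)
  moreover have "(\<lambda>k. d^2 + e k) \<longlonglongrightarrow> d^2 + 0" by (intro tendsto_intros e0)
  ultimately have le: "norm (x - m0)^2 \<le> d^2 + 0"
    using sq by (intro LIMSEQ_le) auto
  have opt: "norm (x - m0)^2 \<le> norm (x - m')^2" if "m' \<in> M" for m'
  proof -
    have "d \<le> norm (x - m')" using dle[OF that] by (simp add: dist_norm)
    hence "d^2 \<le> norm (x - m')^2" using d0 by (simp add: power_mono)
    thus ?thesis using le by linarith
  qed
  show ?thesis
  proof (intro bexI[OF _ m0M] ballI)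
    fix y assume yM: "y \<in> M"
    define a where "a = inner (x - m0) y"
    define c where "c = inner y y"
    have c0: "c \<ge> 0" by (simp add: c_def)
    define t where "t = a / (c + 1)"
    have mt: "m0 + t *\<^sub>R y \<in> M" using m0M yM sub by (simp add: subspace_add subspace_scale)
    define u where "u = x - m0"
    from opt[OF mt] have "norm u^2 \<le> norm (u - t *\<^sub>R y)^2"
      by (simp add: algebra_simps u_def)
    moreover have "norm (u - t *\<^sub>R y)^2 = norm u^2 - 2 * t * a + t^2 * c"
      unfolding power2_norm_eq_inner a_def c_def u_def[symmetric]
      by (simp add: inner_diff_left inner_diff_right inner_commute power2_eq_square algebra_simps)
    ultimately have "0 \<le> - 2 * t * a + t^2 * c" by simp
    moreover have "- 2 * t * a + t^2 * c = - (a^2 * (c + 2)) / (c+1)^2"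
      using c0 t_def by (rule quad_aux)
    ultimately have "0 \<le> - (a^2 * (c + 2)) / (c+1)^2" by simp
    hence "a^2 * (c + 2) \<le> 0" using c0
      by (auto simp: zero_le_divide_iff divide_le_0_iff)
    hence "a^2 \<le> 0" using c0 by (simp add: mult_le_0_iff)
    thus "inner (x - m0) y = 0" by (simp add: a_def)
  qed
qed

lemma orth_orth_in:
  fixes M :: "'a::{real_inner,complete_space} set"
  assumes sub: "subspace M" and cl: "closed M"
    and x: "\<And>y. (\<forall>m\<in>M. inner y m = 0) \<Longrightarrow> inner x y = 0"
  shows "x \<in> M"
proof -
  obtain m where mM: "m \<in> M" and o: "\<forall>y\<in>M. inner (x - m) y = 0"
    using projection_exists[OF sub cl] by blast
  have "\<forall>y\<in>M. inner (x - m) y = 0" using o .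
  hence "inner x (x - m) = 0" using x[of "x - m"] by (simp add: inner_commute)
  moreover have "inner m (x - m) = 0" using o mM by (simp add: inner_commute)
  ultimately have "inner (x - m) (x - m) = 0" by (simp add: inner_diff_left)
  thus ?thesis using mM by simp
qed



lemma riesz:
  fixes \<phi> :: "'a::{real_inner,complete_space} \<Rightarrow> real"
  assumes bl: "bounded_linear \<phi>"
  shows "\<exists>z. \<forall>x. \<phi> x = inner x z"
proof (cases "\<forall>x. \<phi> x = 0")
  case True thus ?thesis by (intro exI[of _ 0]) simp
next
  case False
  then obtain x0 where x0: "\<phi> x0 \<noteq> 0" by blast
  interpret bounded_linear \<phi> by (rule bl)
  define M where "M = {x. \<phi> x = 0}"
  have sub: "subspace M" unfolding M_def subspace_def by (simp add: add scale)
  have cl: "closed M" unfolding M_def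
    by (rule closed_Collect_eq) (auto intro: linear_continuous_on bl continuous_on_const)
  obtain m where mM: "m \<in> M" and o: "\<forall>y\<in>M. inner (x0 - m) y = 0"
    using projection_exists[OF sub cl] by blast
  define w where "w = x0 - m"
  have pw: "\<phi> w = \<phi> x0" using mM by (simp add: w_def M_def diff)
  have o': "\<forall>y\<in>M. inner w y = 0" using o by (simp add: w_def)
  have key: "\<phi> x * inner w w = \<phi> w * inner x w" for x
  proof -
    have "\<phi> x *\<^sub>R w - \<phi> w *\<^sub>R x \<in> M" by (simp add: M_def diff scale)
    with o' have "inner w (\<phi> x *\<^sub>R w - \<phi> w *\<^sub>R x) = 0" by blast
    thus ?thesis by (simp add: inner_diff_right inner_commute)
  qed
  have wne: "inner w w \<noteq> 0" using pw x0 by auto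
  show ?thesis
  proof (intro exI allI)
    fix x
    show "\<phi> x = inner x ((\<phi> w / inner w w) *\<^sub>R w)"
      using key[of x] wne by (simp add: field_simps)
  qed
qed

definition radj :: "('a::real_inner \<Rightarrow> 'b::real_inner) \<Rightarrow> 'b \<Rightarrow> 'a" where
  "radj Y y = (SOME z. \<forall>x. inner (Y x) y = inner x z)"

lemma inner_ext: "(\<And>x. inner x a = inner x b) \<Longrightarrow> a = (b::'a::real_inner)"
proof -
  assume h: "\<And>x. inner x a = inner x b"
  have "inner (a - b) (a - b) = 0" using h[of "a - b"] by (simp add: inner_diff_right)
  thus ?thesis by simp
qed

lemma radj_prop:
  fixes Y :: "'a::{real_inner,complete_space} \<Rightarrow> 'b::real_inner"
  assumes "bounded_linear Y"
  shows "inner (Y x) y = inner x (radj Y y)"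
proof -
  have "bounded_linear (\<lambda>x. inner (Y x) y)"
    using bounded_linear_compose[OF bounded_linear_inner_left assms] .
  from riesz[OF this] have "\<exists>z. \<forall>x. inner (Y x) y = inner x z" .
  from someI_ex[OF this] show ?thesis unfolding radj_def by blast
qed

lemma radj_bl:
  fixes Y :: "'a::{real_inner,complete_space} \<Rightarrow> 'b::real_inner"
  assumes bl: "bounded_linear Y"
  shows "bounded_linear (radj Y)"
proof -
  obtain KB where KB: "\<And>x. norm (Y x) \<le> norm x * KB" "KB > 0"
    using bounded_linear.pos_bounded[OF bl] by blast
  show ?thesis
  proof (rule bounded_linear_intro[where K=KB])
    fix a b show "radj Y (a + b) = radj Y a + radj Y b"
      by (rule inner_ext) (simp add: radj_prop[OF bl, symmetric] inner_add_right)
  next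
    fix r a show "radj Y (r *\<^sub>R a) = r *\<^sub>R radj Y a"
      by (rule inner_ext) (simp add: radj_prop[OF bl, symmetric])
  next
    fix y
    have "norm (radj Y y)^2 = inner (Y (radj Y y)) y"
      by (simp add: radj_prop[OF bl] power2_norm_eq_inner)
    also have "\<dots> \<le> norm (Y (radj Y y)) * norm y" by (rule norm_cauchy_schwarz)
    also have "\<dots> \<le> norm (radj Y y) * KB * norm y" using KB by (simp add: mult_right_mono)
    finally have "norm (radj Y y) * norm (radj Y y) \<le> norm (radj Y y) * (norm y * KB)"
      by (simp add: power2_eq_square algebra_simps)
    thus "norm (radj Y y) \<le> norm y * KB"
      by (cases "norm (radj Y y) = 0") (use KB(2) in \<open>auto simp: mult_le_cancel_left\<close>)
  qed
qed

lemma adj_unique: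
  assumes J1: "cstruct J1" and J2: "cstruct J2"
    and G: "clinear_op J2 J1 G" "\<forall>x y. cinner J2 (Y x) y = cinner J1 x (G y)"
  shows "adj J1 J2 Y = G"
  unfolding adj_def
proof (rule the_equality)
  show "clinear_op J2 J1 G \<and> (\<forall>x y. cinner J2 (Y x) y = cinner J1 x (G y))" using G by blast
next
  fix G' assume h: "clinear_op J2 J1 G' \<and> (\<forall>x y. cinner J2 (Y x) y = cinner J1 x (G' y))"
  show "G' = G"
  proof
    fix y show "G' y = G y"
      apply (rule inner_ext)
      using h G(2) by (metis cinner_eq)
  qed
qed

lemma adj_exists:
  fixes Y :: "'a::{real_inner,complete_space} \<Rightarrow> 'b::real_inner"
  assumes J1: "cstruct J1" and J2: "cstruct J2" and Y: "clinear_op J1 J2 Y"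
  shows "clinear_op J2 J1 (adj J1 J2 Y) \<and> (\<forall>x y. inner (Y x) y = inner x (adj J1 J2 Y y))"
proof -
  have bl: "bounded_linear Y" using Y by (simp add: clinear_op_def)
  have YJ: "Y (J1 x) = J2 (Y x)" for x using Y by (simp add: clinear_op_def)
  have comm: "radj Y (J2 y) = J1 (radj Y y)" for y
  proof (rule inner_ext)
    fix x
    have "inner x (radj Y (J2 y)) = inner (Y x) (J2 y)" by (simp add: radj_prop[OF bl])
    also have "\<dots> = - inner (J2 (Y x)) y" using cstruct_inner_left[OF J2, of "Y x" y] by simp
    also have "\<dots> = - inner (J1 x) (radj Y y)" by (simp add: YJ[symmetric] radj_prop[OF bl])
    also have "\<dots> = inner x (J1 (radj Y y))" using cstruct_inner_left[OF J1] by simp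
    finally show "inner x (radj Y (J2 y)) = inner x (J1 (radj Y y))" .
  qed
  have cl: "clinear_op J2 J1 (radj Y)" using radj_bl[OF bl] comm by (simp add: clinear_op_def)
  have ci: "\<forall>x y. cinner J2 (Y x) y = cinner J1 x (radj Y y)"
    by (simp add: cinner_eq radj_prop[OF bl] comm)
  have "adj J1 J2 Y = radj Y" by (rule adj_unique[OF J1 J2 cl ci])
  thus ?thesis using cl radj_prop[OF bl] by simp
qed



fun cc :: "nat \<Rightarrow> real" where
  "cc n = (if n \<le> 1 then (if n = 1 then 1/2 else 0) else (\<Sum>i\<in>{1..<n}. cc i * cc (n - i)) / 2)"

declare cc.simps[simp del]

lemma cc0[simp]: "cc 0 = 0" by (simp add: cc.simps)
lemma cc1[simp]: "cc 1 = 1/2" by (simp add: cc.simps)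
lemma cc1s[simp]: "cc (Suc 0) = 1/2" by (simp add: cc.simps)

lemma cc_nonneg: "cc n \<ge> 0"
proof (induction n rule: less_induct)
  case (less n)
  show ?case
  proof (cases "n \<le> 1")
    case True thus ?thesis by (simp add: cc.simps)
  next
    case False
    have "(\<Sum>i\<in>{1..<n}. cc i * cc (n - i)) \<ge> 0"
      by (intro sum_nonneg mult_nonneg_nonneg) (auto intro: less)
    thus ?thesis using False by (simp add: cc.simps[of n])
  qed
qed

definition conv :: "nat \<Rightarrow> real" where
  "conv n = (\<Sum>i\<le>n. cc i * cc (n - i))"

lemma conv_nonneg: "conv n \<ge> 0"
  unfolding conv_def by (intro sum_nonneg mult_nonneg_nonneg cc_nonneg)

lemma conv_eq: "conv n = 2 * cc n - (if n = 1 then 1 else 0)"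
proof (cases "n \<le> 1")
  case True
  then consider "n = 0" | "n = 1" by linarith
  thus ?thesis by cases (simp_all add: conv_def)
next
  case False
  have "{..n} = insert 0 (insert n {1..<n})" using False by auto
  hence "conv n = cc 0 * cc n + (cc n * cc 0 + (\<Sum>i\<in>{1..<n}. cc i * cc (n - i)))"
    unfolding conv_def using False by (simp add: sum.insert_if)
  thus ?thesis using False by (simp add: cc.simps[of n])
qed

lemma conv_sum_tri: "(\<Sum>k<M. conv k) = (\<Sum>(i,j)\<in>{(i,j). i + j < M}. cc i * cc j)"
  unfolding conv_def atMost_atLeast0 by (simp add: sum.triangle_reindex atLeast0AtMost)

lemma cc_psum_le1: "(\<Sum>k<N. cc k) \<le> 1"
proof (induction N rule: less_induct)
  case (less N)
  show ?case
  proof (cases "N \<le> 1")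
    case True
    then consider "N = 0" | "N = 1" by linarith
    thus ?thesis by cases simp_all
  next
    case False
    define s where "s = (\<Sum>k<N - 1. cc k)"
    have s1: "s \<le> 1" unfolding s_def using False by (intro less) auto
    have s0: "s \<ge> 0" unfolding s_def by (intro sum_nonneg cc_nonneg)
    have "(\<Sum>k<N. 2 * cc k) = (\<Sum>k<N. conv k + (if k = 1 then 1 else 0))"
      by (intro sum.cong) (auto simp: conv_eq)
    also have "\<dots> = (\<Sum>k<N. conv k) + 1"
      using False by (simp add: sum.distrib)
    finally have e1: "2 * (\<Sum>k<N. cc k) = (\<Sum>k<N. conv k) + 1"
      by (simp add: sum_distrib_left)
    have "(\<Sum>k<N. conv k) = (\<Sum>(i,j)\<in>{(i,j). i + j < N}. cc i * cc j)" by (rule conv_sum_tri)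
    also have "\<dots> = (\<Sum>(i,j)\<in>{(i,j). i + j < N} \<inter> ({..<N-1} \<times> {..<N-1}). cc i * cc j)"
    proof (rule sum.mono_neutral_right)
      show "finite {(i,j). i + j < N}"
        by (rule finite_subset[of _ "{..<N} \<times> {..<N}"]) auto
      show "{(i,j). i + j < N} \<inter> ({..<N-1} \<times> {..<N-1}) \<subseteq> {(i,j). i + j < N}" by blast
      show "\<forall>p\<in>{(i,j). i + j < N} - {(i,j). i + j < N} \<inter> ({..<N-1} \<times> {..<N-1}).
              (case p of (i,j) \<Rightarrow> cc i * cc j) = 0"
      proof
        fix p assume "p \<in> {(i,j). i + j < N} - {(i,j). i + j < N} \<inter> ({..<N-1} \<times> {..<N-1})"
        then obtain i j where p: "p = (i,j)" "i + j < N" "\<not> (i < N - 1 \<and> j < N - 1)" by auto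
        hence "i = 0 \<or> j = 0" by auto
        thus "(case p of (i,j) \<Rightarrow> cc i * cc j) = 0" using p by auto
      qed
    qed
    also have "\<dots> \<le> (\<Sum>(i,j)\<in>{..<N-1} \<times> {..<N-1}. cc i * cc j)"
      by (intro sum_mono2) (auto intro: mult_nonneg_nonneg cc_nonneg)
    also have "\<dots> = s * s" unfolding s_def by (simp add: sum_product sum.cartesian_product)
    also have "\<dots> \<le> 1" using s0 s1 by (simp add: mult_le_one)
    finally show ?thesis using e1 by linarith
  qed
qed

lemma cc_summable: "summable cc"
  by (rule summableI_nonneg_bounded[OF cc_nonneg cc_psum_le1])

lemma cc_suminf: "suminf cc = 1"
proof -
  define S where "S = suminf cc"
  have a: "conv sums (S * S)"
    unfolding conv_def S_def
    using Cauchy_product_sums[of cc cc] cc_summable cc_nonneg by simp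
  have "(\<lambda>n. 2 * cc n - (if n = 1 then 1 else 0)) sums (2 * S - 1)"
  proof (rule sums_diff)
    show "(\<lambda>n. 2 * cc n) sums (2 * S)" unfolding S_def
      by (intro sums_mult summable_sums cc_summable)
    show "(\<lambda>n. if n = 1 then 1 else 0 :: real) sums 1"
      using sums_single[of 1 "\<lambda>_. 1::real"] by simp
  qed
  hence "conv sums (2 * S - 1)" by (simp add: conv_eq[abs_def])
  with a have "S * S = 2 * S - 1" by (simp add: sums_unique2)
  hence "(S - 1)^2 = 0" by (simp add: power2_eq_square algebra_simps)
  thus ?thesis by (simp add: S_def)
qed

lemma conv_sums1: "conv sums 1"
proof -
  have "conv sums (suminf cc * suminf cc)"
    unfolding conv_def using Cauchy_product_sums[of cc cc] cc_summable cc_nonneg by simp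
  thus ?thesis by (simp add: cc_suminf)
qed

lemma gap_tendsto: "(\<lambda>N. (\<Sum>k<N. cc k) * (\<Sum>k<N. cc k) - (\<Sum>k<N. conv k)) \<longlonglongrightarrow> 0"
proof -
  have "(\<lambda>N. \<Sum>k<N. cc k) \<longlonglongrightarrow> 1" using summable_LIMSEQ[OF cc_summable] cc_suminf by simp
  moreover have "(\<lambda>N. \<Sum>k<N. conv k) \<longlonglongrightarrow> 1" using conv_sums1 by (simp add: sums_def)
  ultimately have "(\<lambda>N. (\<Sum>k<N. cc k) * (\<Sum>k<N. cc k) - (\<Sum>k<N. conv k)) \<longlonglongrightarrow> 1 * 1 - 1"
    by (intro tendsto_intros)
  thus ?thesis by simp
qed



definition psum :: "('a::real_vector \<Rightarrow> 'a) \<Rightarrow> nat \<Rightarrow> 'a \<Rightarrow> 'a" where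
  "psum A N x = (\<Sum>k<N. cc k *\<^sub>R (A ^^ (2*k)) x)"

definition Tsq :: "('a::real_normed_vector \<Rightarrow> 'a) \<Rightarrow> 'a \<Rightarrow> 'a" where
  "Tsq A x = (\<Sum>k. cc k *\<^sub>R (A ^^ (2*k)) x)"

definition qsum :: "('a::real_vector \<Rightarrow> 'a) \<Rightarrow> nat \<Rightarrow> 'a \<Rightarrow> 'a" where
  "qsum A N x = (\<Sum>k<N. conv k *\<^sub>R (A ^^ (2*k)) x)"

locale scontr =
  fixes A :: "'a::{real_inner,complete_space} \<Rightarrow> 'a"
  assumes bl: "bounded_linear A"
    and contr: "\<And>x. norm (A x) \<le> norm x"
    and sym: "\<And>x y. inner (A x) y = inner x (A y)"
begin

lemma blk: "bounded_linear (A ^^ k)"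
  by (induction k) (auto intro: bounded_linear_ident bounded_linear_compose[OF bl] simp: id_def)

lemma contrk: "norm ((A ^^ k) x) \<le> norm x"
  by (induction k) (auto intro: order_trans[OF contr])

lemma symk: "inner ((A ^^ k) x) y = inner x ((A ^^ k) y)"
  by (induction k arbitrary: x y) (auto simp: sym funpow_swap1)

lemma funpow_comm: "bounded_linear L \<Longrightarrow> (\<And>x. L (A x) = A (L x)) \<Longrightarrow> L ((A ^^ k) x) = (A ^^ k) (L x)"
  by (induction k) auto

lemma nsum: "summable (\<lambda>k. norm (cc k *\<^sub>R (A ^^ (2*k)) x))"
proof (rule summable_comparison_test[OF _ summable_mult2[OF cc_summable, of "norm x"]])
  show "\<exists>N. \<forall>n\<ge>N. norm (norm (cc n *\<^sub>R (A ^^ (2 * n)) x)) \<le> cc n * norm x"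
    using contrk cc_nonneg by (auto intro!: mult_left_mono)
qed

lemma summ: "summable (\<lambda>k. cc k *\<^sub>R (A ^^ (2*k)) x)"
  by (rule summable_norm_cancel'[OF nsum])

lemma psum_tendsto: "(\<lambda>N. psum A N x) \<longlonglongrightarrow> Tsq A x"
  unfolding psum_def Tsq_def by (rule summable_LIMSEQ[OF summ])

lemma psum_norm: "norm (psum A N x) \<le> norm x"
proof -
  have "norm (psum A N x) \<le> (\<Sum>k<N. norm (cc k *\<^sub>R (A ^^ (2*k)) x))"
    unfolding psum_def by (rule norm_sum)
  also have "\<dots> \<le> (\<Sum>k<N. cc k * norm x)"
    using contrk cc_nonneg by (intro sum_mono) (auto intro!: mult_left_mono)
  also have "\<dots> = (\<Sum>k<N. cc k) * norm x" by (simp add: sum_distrib_right)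
  also have "\<dots> \<le> norm x" by (intro mult_left_le_one_le) (auto intro: sum_nonneg cc_nonneg cc_psum_le1)
  finally show ?thesis .
qed

lemma Tsq_norm: "norm (Tsq A x) \<le> norm x"
proof -
  have "(\<lambda>N. norm (psum A N x)) \<longlonglongrightarrow> norm (Tsq A x)" by (intro tendsto_intros psum_tendsto)
  thus ?thesis using psum_norm by (intro LIMSEQ_le_const2) auto
qed

lemma psum_comm:
  assumes L: "bounded_linear L" "\<And>x. L (A x) = A (L x)"
  shows "L (psum A N x) = psum A N (L x)"
  unfolding psum_def using L
  by (simp add: linear_sum[OF bounded_linear.linear[OF L(1)]] linear_scale[OF bounded_linear.linear[OF L(1)]] funpow_comm)

lemma Tsq_comm:
  assumes L: "bounded_linear L" "\<And>x. L (A x) = A (L x)"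
  shows "L (Tsq A x) = Tsq A (L x)"
proof -
  have "(\<lambda>N. L (psum A N x)) \<longlonglongrightarrow> L (Tsq A x)"
    by (rule bounded_linear.tendsto[OF L(1) psum_tendsto])
  moreover have "(\<lambda>N. L (psum A N x)) \<longlonglongrightarrow> Tsq A (L x)"
    using psum_comm[OF L] psum_tendsto by simp
  ultimately show ?thesis by (rule LIMSEQ_unique)
qed

lemma psum_add: "psum A N (x + y) = psum A N x + psum A N y"
  unfolding psum_def by (simp add: linear_add[OF bounded_linear.linear[OF blk]] scaleR_add_right sum.distrib)

lemma psum_scale: "psum A N (r *\<^sub>R x) = r *\<^sub>R psum A N x"
  unfolding psum_def by (simp add: linear_scale[OF bounded_linear.linear[OF blk]] scaleR_sum_right mult.commute)

lemma Tsq_bl: "bounded_linear (Tsq A)"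
proof (rule bounded_linear_intro[where K=1])
  fix x y
  have "(\<lambda>N. psum A N (x + y)) \<longlonglongrightarrow> Tsq A x + Tsq A y"
    unfolding psum_add by (intro tendsto_intros psum_tendsto)
  thus "Tsq A (x + y) = Tsq A x + Tsq A y" using psum_tendsto LIMSEQ_unique by blast
next
  fix r x
  have "(\<lambda>N. psum A N (r *\<^sub>R x)) \<longlonglongrightarrow> r *\<^sub>R Tsq A x"
    unfolding psum_scale by (intro tendsto_intros psum_tendsto)
  thus "Tsq A (r *\<^sub>R x) = r *\<^sub>R Tsq A x" using psum_tendsto LIMSEQ_unique by blast
next
  fix x show "norm (Tsq A x) \<le> norm x * 1" using Tsq_norm by simp
qed

lemma Tsq_sym: "inner (Tsq A x) y = inner x (Tsq A y)"
proof -
  have p: "inner (psum A N x) y = inner x (psum A N y)" for N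
    unfolding psum_def by (simp add: inner_sum_left inner_sum_right symk)
  have "(\<lambda>N. inner (psum A N x) y) \<longlonglongrightarrow> inner (Tsq A x) y" by (intro tendsto_intros psum_tendsto)
  moreover have "(\<lambda>N. inner (psum A N x) y) \<longlonglongrightarrow> inner x (Tsq A y)"
    unfolding p by (intro tendsto_intros psum_tendsto)
  ultimately show ?thesis by (rule LIMSEQ_unique)
qed

lemma Tsq_inner_le: "inner (Tsq A x) x \<le> inner x x"
  using norm_cauchy_schwarz[of "Tsq A x" x] Tsq_norm[of x]
  by (smt (verit) mult_right_mono norm_ge_zero power2_norm_eq_inner power2_eq_square)

lemma pp_expand: "psum A N (psum A N x) = (\<Sum>(i,j)\<in>{..<N} \<times> {..<N}. (cc i * cc j) *\<^sub>R (A ^^ (2*(i+j))) x)"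
proof -
  have "psum A N (psum A N x) = (\<Sum>i<N. \<Sum>j<N. (cc i * cc j) *\<^sub>R (A ^^ (2*(i+j))) x)"
    unfolding psum_def
    by (simp add: linear_sum[OF bounded_linear.linear[OF blk]] linear_scale[OF bounded_linear.linear[OF blk]] scaleR_sum_right
        funpow_add add_mult_distrib2)
  thus ?thesis by (simp add: sum.cartesian_product)
qed

lemma q_expand: "qsum A N x = (\<Sum>(i,j)\<in>{(i,j). i + j < N}. (cc i * cc j) *\<^sub>R (A ^^ (2*(i+j))) x)"
proof -
  define g where "g i j = (cc i * cc j) *\<^sub>R (A ^^ (2*(i+j))) x" for i j
  have "qsum A N x = (\<Sum>k<N. \<Sum>i\<le>k. g i (k - i))"
    unfolding qsum_def conv_def g_def by (intro sum.cong refl) (simp add: scaleR_sum_left)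
  also have "\<dots> = (\<Sum>(i,j)\<in>{(i,j). i + j < N}. g i j)" by (rule sum.triangle_reindex[symmetric])
  finally show ?thesis by (simp add: g_def)
qed

lemma pq_gap: "norm (psum A N (psum A N x) - qsum A N x)
   \<le> ((\<Sum>k<N. cc k) * (\<Sum>k<N. cc k) - (\<Sum>k<N. conv k)) * norm x"
proof -
  define Sq where "Sq = {..<N} \<times> {..<N}"
  define Tr where "Tr = {(i::nat,j::nat). i + j < N}"
  define g where "g = (\<lambda>(i,j). (cc i * cc j) *\<^sub>R (A ^^ (2*(i+j))) x)"
  define h where "h = (\<lambda>(i::nat,j::nat). cc i * cc j)"
  have fin: "finite Sq" unfolding Sq_def by simp
  have sub: "Tr \<subseteq> Sq" unfolding Tr_def Sq_def by auto
  have "psum A N (psum A N x) - qsum A N x = sum g Sq - sum g Tr"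
    unfolding pp_expand q_expand g_def Sq_def Tr_def by simp
  also have "\<dots> = sum g (Sq - Tr)" using sum.subset_diff[OF sub fin, of g] by simp
  finally have e: "psum A N (psum A N x) - qsum A N x = sum g (Sq - Tr)" .
  have "norm (sum g (Sq - Tr)) \<le> (\<Sum>p\<in>Sq - Tr. h p * norm x)"
  proof (rule order_trans[OF norm_sum], intro sum_mono)
    fix p assume "p \<in> Sq - Tr"
    obtain i j where p: "p = (i,j)" by fastforce
    show "norm (g p) \<le> h p * norm x"
      using contrk[of "2*(i+j)" x] cc_nonneg[of i] cc_nonneg[of j]
      by (simp add: p g_def h_def mult_left_mono)
  qed
  also have "\<dots> = (sum h Sq - sum h Tr) * norm x"
    using sum.subset_diff[OF sub fin, of h] by (simp add: sum_distrib_right)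
  also have "sum h Sq = (\<Sum>k<N. cc k) * (\<Sum>k<N. cc k)"
    unfolding h_def Sq_def by (simp add: sum_product sum.cartesian_product)
  also have "sum h Tr = (\<Sum>k<N. conv k)"
    unfolding h_def Tr_def by (simp add: conv_sum_tri)
  finally show ?thesis using e by simp
qed

lemma q_tendsto: "(\<lambda>N. qsum A N x) \<longlonglongrightarrow> 2 *\<^sub>R Tsq A x - A (A x)"
proof -
  have s1: "(\<lambda>k. (2 * cc k) *\<^sub>R (A ^^ (2*k)) x) sums (2 *\<^sub>R Tsq A x)"
    unfolding Tsq_def using sums_scaleR_right[OF summable_sums[OF summ], of 2]
    by (simp add: scaleR_scaleR)
  have s2: "(\<lambda>k. if k = 1 then (A ^^ (2*k)) x else 0) sums (A (A x))"
    using sums_single[of 1 "\<lambda>k. (A ^^ (2*k)) x"] by (simp add: numeral_2_eq_2)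
  have s3: "(\<lambda>k. (2 * cc k) *\<^sub>R (A ^^ (2*k)) x - (if k = 1 then (A ^^ (2*k)) x else 0))
          sums (2 *\<^sub>R Tsq A x - A (A x))"
    by (rule sums_diff[OF s1 s2])
  have eqf: "(\<lambda>k. (2 * cc k) *\<^sub>R (A ^^ (2*k)) x - (if k = 1 then (A ^^ (2*k)) x else 0))
      = (\<lambda>k. conv k *\<^sub>R (A ^^ (2*k)) x)"
    by (rule ext) (simp add: conv_eq scaleR_diff_left)
  have "(\<lambda>k. conv k *\<^sub>R (A ^^ (2*k)) x) sums (2 *\<^sub>R Tsq A x - A (A x))"
    unfolding eqf[symmetric] by (rule s3)
  thus ?thesis unfolding qsum_def sums_def .
qed

lemma pp_tendsto: "(\<lambda>N. psum A N (psum A N x)) \<longlonglongrightarrow> Tsq A (Tsq A x)"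
proof -
  have a: "(\<lambda>N. psum A N (psum A N x - Tsq A x)) \<longlonglongrightarrow> 0"
  proof (rule tendsto_norm_zero_cancel, rule Lim_null_comparison)
    show "\<forall>\<^sub>F N in sequentially. norm (norm (psum A N (psum A N x - Tsq A x))) \<le> norm (psum A N x - Tsq A x)"
      using psum_norm by simp
    show "(\<lambda>N. norm (psum A N x - Tsq A x)) \<longlonglongrightarrow> 0"
      using psum_tendsto[of x] by (simp add: LIM_zero_iff tendsto_norm_zero)
  qed
  have b: "(\<lambda>N. psum A N (Tsq A x)) \<longlonglongrightarrow> Tsq A (Tsq A x)" by (rule psum_tendsto)
  have "(\<lambda>N. psum A N (psum A N x - Tsq A x) + psum A N (Tsq A x)) \<longlonglongrightarrow> 0 + Tsq A (Tsq A x)"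
    by (intro tendsto_intros a b)
  moreover have "psum A N (psum A N x - Tsq A x) + psum A N (Tsq A x) = psum A N (psum A N x)" for N
    using psum_add[of N "psum A N x - Tsq A x" "Tsq A x"] by simp
  ultimately show ?thesis by simp
qed

lemma TT: "Tsq A (Tsq A x) = 2 *\<^sub>R Tsq A x - A (A x)"
proof -
  have "(\<lambda>N. psum A N (psum A N x) - qsum A N x) \<longlonglongrightarrow> 0"
  proof (rule tendsto_norm_zero_cancel, rule Lim_null_comparison)
    show "\<forall>\<^sub>F N in sequentially. norm (norm (psum A N (psum A N x) - qsum A N x))
        \<le> ((\<Sum>k<N. cc k) * (\<Sum>k<N. cc k) - (\<Sum>k<N. conv k)) * norm x"
      using pq_gap by simp
    show "(\<lambda>N. ((\<Sum>k<N. cc k) * (\<Sum>k<N. cc k) - (\<Sum>k<N. conv k)) * norm x) \<longlonglongrightarrow> 0"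
      using tendsto_mult_left_zero[OF gap_tendsto] by simp
  qed
  moreover have "(\<lambda>N. psum A N (psum A N x) - qsum A N x) \<longlonglongrightarrow> Tsq A (Tsq A x) - (2 *\<^sub>R Tsq A x - A (A x))"
    by (intro tendsto_intros pp_tendsto q_tendsto)
  ultimately have "Tsq A (Tsq A x) - (2 *\<^sub>R Tsq A x - A (A x)) = 0" using LIMSEQ_unique by blast
  thus ?thesis by simp
qed

end



definition Rsq :: "('a::real_normed_vector \<Rightarrow> 'a) \<Rightarrow> 'a \<Rightarrow> 'a" where
  "Rsq A x = x - Tsq A x"

lemma pos_zero:
  fixes R :: "'a::real_inner \<Rightarrow> 'a"
  assumes bl: "bounded_linear R" and sy: "\<And>x y. inner (R x) y = inner x (R y)"
    and pos: "\<And>x. inner (R x) x \<ge> 0" and z: "inner (R y) y = 0"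
  shows "R y = 0"
proof -
  interpret bounded_linear R by (rule bl)
  define w where "w = R y"
  define a where "a = inner (R y) w"
  define c where "c = inner (R w) w"
  have c0: "c \<ge> 0" using pos by (simp add: c_def)
  define t where "t = - a / (c + 1)"
  have yw: "inner y (R w) = inner w (R y)" using sy[of w y] by (simp add: inner_commute)
  have "0 \<le> inner (R (y + t *\<^sub>R w)) (y + t *\<^sub>R w)" by (rule pos)
  also have "\<dots> = inner (R y) y + 2 * t * a + t^2 * c"
    by (simp add: add scale inner_add_left inner_add_right a_def c_def yw power2_eq_square algebra_simps inner_commute)
  finally have "0 \<le> 2 * t * a + t^2 * c" using z by simp
  moreover have "2 * t * a + t^2 * c = - 2 * (a / (c+1)) * a + (a / (c+1))^2 * c"
    by (simp add: t_def power2_eq_square)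
  moreover have "- 2 * (a / (c+1)) * a + (a / (c+1))^2 * c = - (a^2 * (c + 2)) / (c+1)^2"
    using c0 by (rule quad_aux) simp
  ultimately have "0 \<le> - (a^2 * (c + 2)) / (c+1)^2" by simp
  hence "a^2 * (c + 2) \<le> 0" using c0 by (auto simp: zero_le_divide_iff divide_le_0_iff)
  hence "a^2 \<le> 0" using c0 by (simp add: mult_le_0_iff)
  hence "inner w w = 0" by (simp add: a_def w_def)
  thus ?thesis by (simp add: w_def)
qed

lemma cpos_sym:
  assumes J: "cstruct J" and S: "clinear_op J J S" and im: "\<And>x. inner (S x) (J x) = 0"
  shows "inner (S x) y = inner x (S y)"
proof -
  have bl: "bounded_linear S" and SJ: "\<And>x. S (J x) = J (S x)" using S by (auto simp: clinear_op_def)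
  interpret S: bounded_linear S by (rule bl)
  interpret J: bounded_linear J using cstruct_linear[OF J] .
  have "inner (S (x + J y)) (J (x + J y)) = 0" by (rule im)
  hence "inner (S x) (J x) + inner (S x) (J (J y)) + inner (S (J y)) (J x) + inner (S (J y)) (J (J y)) = 0"
    by (simp add: S.add J.add inner_add_left inner_add_right)
  hence "inner (S x) (J (J y)) + inner (S (J y)) (J x) = 0"
    using im[of x] im[of "J y"] by simp
  hence "- inner (S x) y + inner (J (S y)) (J x) = 0"
    using cstruct_JJ[OF J] SJ by simp
  hence "inner (S x) y = inner (S y) x" using cstruct_inner[OF J] by simp
  thus ?thesis by (simp add: inner_commute)
qed

context scontr
begin

lemma funpow2_comm:
  assumes "\<And>y. L (A (A y)) = A (A (L y))"
  shows "L ((A ^^ (2*k)) x) = (A ^^ (2*k)) (L x)"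
proof (induction k arbitrary: x)
  case 0 thus ?case by simp
next
  case (Suc k)
  have "(A ^^ (2 * Suc k)) x = A (A ((A ^^ (2*k)) x))" by simp
  thus ?case using Suc assms by simp
qed

lemma Tsq_comm2:
  assumes L: "bounded_linear L" "\<And>y. L (A (A y)) = A (A (L y))"
  shows "L (Tsq A x) = Tsq A (L x)"
proof -
  have p: "L (psum A N x) = psum A N (L x)" for N
    unfolding psum_def using L
    by (simp add: linear_sum[OF bounded_linear.linear[OF L(1)]] linear_scale[OF bounded_linear.linear[OF L(1)]] funpow2_comm)
  have "(\<lambda>N. L (psum A N x)) \<longlonglongrightarrow> L (Tsq A x)"
    by (rule bounded_linear.tendsto[OF L(1) psum_tendsto])
  moreover have "(\<lambda>N. L (psum A N x)) \<longlonglongrightarrow> Tsq A (L x)"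
    using p psum_tendsto by simp
  ultimately show ?thesis by (rule LIMSEQ_unique)
qed

lemma Rsq_bl: "bounded_linear (Rsq A)"
  unfolding Rsq_def[abs_def] by (intro bounded_linear_sub bounded_linear_ident Tsq_bl)

lemma Rsq_sym: "inner (Rsq A x) y = inner x (Rsq A y)"
  by (simp add: Rsq_def inner_diff_left inner_diff_right Tsq_sym)

lemma Rsq_pos: "inner (Rsq A x) x \<ge> 0"
  using Tsq_inner_le[of x] by (simp add: Rsq_def inner_diff_left)

lemma Rsq_comm: "bounded_linear L \<Longrightarrow> (\<And>x. L (A x) = A (L x)) \<Longrightarrow> L (Rsq A x) = Rsq A (L x)"
  by (simp add: Rsq_def Tsq_comm linear_diff[OF bounded_linear.linear])

lemma Rsq_comm2: "bounded_linear L \<Longrightarrow> (\<And>y. L (A (A y)) = A (A (L y))) \<Longrightarrow> L (Rsq A x) = Rsq A (L x)"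
  by (simp add: Rsq_def Tsq_comm2 linear_diff[OF bounded_linear.linear])

lemma Rsq_sq: "Rsq A (Rsq A x) = x - A (A x)"
proof -
  interpret T: bounded_linear "Tsq A" by (rule Tsq_bl)
  show ?thesis by (simp add: Rsq_def T.diff TT scaleR_2 algebra_simps)
qed

lemma Rsq_unique:
  assumes bS: "bounded_linear S" and sS: "\<And>x y. inner (S x) y = inner x (S y)"
    and pS: "\<And>x. inner (S x) x \<ge> 0" and sq: "\<And>x. S (S x) = x - A (A x)"
  shows "S = Rsq A"
proof
  fix x
  interpret S: bounded_linear S by (rule bS)
  interpret R: bounded_linear "Rsq A" by (rule Rsq_bl)
  have SAA: "S (A (A y)) = A (A (S y))" for y
  proof -
    have "S (S (S y)) = S y - S (A (A y))" by (simp add: sq S.diff)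
    moreover have "S (S (S y)) = S y - A (A (S y))" by (rule sq)
    ultimately show ?thesis by simp
  qed
  have RS: "S (Rsq A z) = Rsq A (S z)" for z by (rule Rsq_comm2[OF bS SAA])
  define y where "y = Rsq A x - S x"
  have "Rsq A y + S y = Rsq A (Rsq A x) - Rsq A (S x) + S (Rsq A x) - S (S x)"
    by (simp add: y_def R.diff S.diff)
  also have "\<dots> = 0" by (simp add: Rsq_sq sq RS)
  finally have sum0: "Rsq A y + S y = 0" .
  have "inner (Rsq A y) y + inner (S y) y = 0" using sum0
    by (metis inner_add_left inner_zero_left)
  hence z1: "inner (Rsq A y) y = 0" and z2: "inner (S y) y = 0"
    using Rsq_pos[of y] pS[of y] by linarith+
  have Ry: "Rsq A y = 0" by (rule pos_zero[OF Rsq_bl Rsq_sym Rsq_pos z1])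
  have Sy: "S y = 0" by (rule pos_zero[OF bS sS pS z2])
  have "inner y y = inner (Rsq A x) y - inner (S x) y" by (simp add: y_def inner_diff_left)
  also have "\<dots> = 0" by (simp add: Rsq_sym sS Ry Sy)
  finally show "S x = Rsq A x" by (simp add: y_def)
qed

lemma Rsq_invariant:
  assumes sub: "subspace M" and cl: "closed M" and inv: "A ` M \<subseteq> M" and x: "x \<in> M"
  shows "Rsq A x \<in> M"
proof -
  have k: "(A ^^ k) x \<in> M" for k by (induction k) (use x inv in auto)
  have "psum A N x \<in> M" for N
    unfolding psum_def by (intro subspace_sum[OF sub] subspace_scale[OF sub] k)
  hence "Tsq A x \<in> M" using closed_sequentially[OF cl, of "\<lambda>N. psum A N x"] psum_tendsto[of x] by blast
  thus ?thesis unfolding Rsq_def using sub x by (simp add: subspace_diff)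
qed

end

lemma defect_is_Rsq:
  fixes A :: "'a::{real_inner,complete_space} \<Rightarrow> 'a"
  assumes J: "cstruct J" and A_op: "clinear_op J J A"
    and A_sa: "\<forall>x y. cinner J (A x) y = cinner J x (A y)"
    and A_contr: "\<forall>x. norm (A x) \<le> norm x"
  shows "scontr A" and "defect J J A = Rsq A" and "clinear_op J J (Rsq A)"
proof -
  have bl: "bounded_linear A" and AJ: "\<And>x. A (J x) = J (A x)" using A_op by (auto simp: clinear_op_def)
  have sy: "inner (A x) y = inner x (A y)" for x y using A_sa by (simp add: cinner_eq)
  show sc: "scontr A" unfolding scontr_def using bl A_contr sy by auto
  interpret scontr A by (rule sc)
  have adjA: "adj J J A = A" by (rule adj_unique[OF J J A_op A_sa])
  have JR: "J (Rsq A x) = Rsq A (J x)" for x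
    by (rule Rsq_comm[OF cstruct_linear[OF J]]) (simp add: AJ)
  show clR: "clinear_op J J (Rsq A)" using Rsq_bl JR by (simp add: clinear_op_def)
  have imR: "inner (Rsq A x) (J x) = 0" for x
  proof -
    have p: "inner (psum A N x) (J x) = 0" for N
    proof -
      have "inner ((A ^^ (2*k)) x) (J x) = 0" for k
      proof -
        have "(A ^^ (2*k)) x = (A ^^ k) ((A ^^ k) x)" by (simp add: funpow_add mult_2)
        hence "inner ((A ^^ (2*k)) x) (J x) = inner ((A ^^ k) x) ((A ^^ k) (J x))" by (simp add: symk)
        also have "(A ^^ k) (J x) = J ((A ^^ k) x)"
          by (rule funpow_comm[OF cstruct_linear[OF J], symmetric]) (simp add: AJ)
        finally show ?thesis using cstruct_inner_self[OF J] by simp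
      qed
      thus ?thesis unfolding psum_def by (simp add: inner_sum_left)
    qed
    have "(\<lambda>N. inner (psum A N x) (J x)) \<longlonglongrightarrow> inner (Tsq A x) (J x)"
      by (intro tendsto_intros psum_tendsto)
    hence "inner (Tsq A x) (J x) = 0" unfolding p by (simp add: LIMSEQ_const_iff)
    thus ?thesis by (simp add: Rsq_def inner_diff_left cstruct_inner_self[OF J])
  qed
  have cpR: "cpositive J (Rsq A)"
    unfolding cpositive_def cinner_def using clR imR Rsq_pos by simp
  have "op_sqrt J (\<lambda>x. x - adj J J A (A x)) = Rsq A"
    unfolding op_sqrt_def adjA
  proof (rule the_equality)
    show "cpositive J (Rsq A) \<and> Rsq A \<circ> Rsq A = (\<lambda>x. x - A (A x))"
      using cpR Rsq_sq by auto
  next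
    fix S assume h: "cpositive J S \<and> S \<circ> S = (\<lambda>x. x - A (A x))"
    have clS: "clinear_op J J S" using h by (simp add: cpositive_def)
    have imS: "inner (S x) (J x) = 0" for x using h by (simp add: cpositive_def cinner_def)
    have pS: "inner (S x) x \<ge> 0" for x using h by (simp add: cpositive_def cinner_def)
    have sq: "S (S x) = x - A (A x)" for x using h by (metis comp_apply)
    show "S = Rsq A"
      by (rule Rsq_unique) (use clS cpos_sym[OF J clS imS] pS sq in \<open>auto simp: clinear_op_def\<close>)
  qed
  thus "defect J J A = Rsq A" by (simp add: defect_def)
qed



section \<open>Closed complex spans\<close>

lemma subspace_closure':
  fixes S :: "'a::real_normed_vector set"
  assumes "subspace S" shows "subspace (closure S)"
  unfolding subspace_def
proof (intro conjI ballI allI)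
  show "0 \<in> closure S" using assms closure_subset subspace_0 by blast
next
  fix x y assume "x \<in> closure S" "y \<in> closure S"
  then obtain a b where a: "\<And>n. a n \<in> S" "a \<longlonglongrightarrow> x" and b: "\<And>n. b n \<in> S" "b \<longlonglongrightarrow> y"
    unfolding closure_sequential by blast
  have "\<And>n. a n + b n \<in> S" using a b assms by (simp add: subspace_add)
  moreover have "(\<lambda>n. a n + b n) \<longlonglongrightarrow> x + y" by (intro tendsto_intros a b)
  ultimately show "x + y \<in> closure S" unfolding closure_sequential
    by (intro exI[where x="\<lambda>n. a n + b n"]) simp
next
  fix c :: real and x assume "x \<in> closure S"
  then obtain a where a: "\<And>n. a n \<in> S" "a \<longlonglongrightarrow> x"
    unfolding closure_sequential by blast
  have "\<And>n. c *\<^sub>R a n \<in> S" using a assms by (simp add: subspace_scale)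
  moreover have "(\<lambda>n. c *\<^sub>R a n) \<longlonglongrightarrow> c *\<^sub>R x" by (intro tendsto_intros a)
  ultimately show "c *\<^sub>R x \<in> closure S" unfolding closure_sequential
    by (intro exI[where x="\<lambda>n. c *\<^sub>R a n"]) simp
qed

lemma subspace_preimage:
  assumes "linear L" "subspace M" shows "subspace {x. L x \<in> M}"
  using assms unfolding subspace_def by (auto simp: linear_add linear_scale linear_0)

lemma cspan_sub:
  assumes "subspace M" "J ` M \<subseteq> M" "X \<subseteq> M"
  shows "cspan J X \<subseteq> M"
  unfolding cspan_def using assms by (intro span_minimal) auto

lemma closure_cspan_sub:
  assumes "subspace M" "closed M" "J ` M \<subseteq> M" "X \<subseteq> M"
  shows "closure (cspan J X) \<subseteq> M"
  by (rule closure_minimal[OF cspan_sub[OF assms(1,3,4)] assms(2)])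

lemma op_image_closure_cspan:
  assumes J: "cstruct J" and L: "bounded_linear L" and LJ: "\<And>x. L (J x) = J (L x)"
    and M: "subspace M" "closed M" "J ` M \<subseteq> M" and LX: "L ` X \<subseteq> M"
  shows "L ` closure (cspan J X) \<subseteq> M"
proof (rule image_closure_subset)
  show "continuous_on (closure (cspan J X)) L" using L linear_continuous_on by blast
  show "closed M" by fact
  have "span (X \<union> J ` X) \<subseteq> {x. L x \<in> M}"
  proof (rule span_minimal)
    show "X \<union> J ` X \<subseteq> {x. L x \<in> M}" using LX M(3) LJ by auto
    show "subspace {x. L x \<in> M}" using subspace_preimage[OF bounded_linear.linear[OF L] M(1)] .
  qed
  thus "L ` cspan J X \<subseteq> M" unfolding cspan_def by auto
qed

lemma csubspace_closure_cspan:
  assumes J: "cstruct J"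
  shows "csubspace J (closure (cspan J X))"
proof -
  have lJ: "linear J" using cstruct_linear[OF J] bounded_linear.linear by blast
  have sub: "subspace (cspan J X)" unfolding cspan_def by (rule subspace_span)
  have "J ` cspan J X \<subseteq> cspan J X"
  proof -
    have "span (X \<union> J ` X) \<subseteq> {x. J x \<in> span (X \<union> J ` X)}"
    proof (rule span_minimal)
      show "subspace {x. J x \<in> span (X \<union> J ` X)}" by (rule subspace_preimage[OF lJ subspace_span])
      have "J (J x) \<in> span (X \<union> J ` X)" if "x \<in> X" for x
        using cstruct_JJ[OF J, of x] that by (simp add: span_base span_neg)
      thus "X \<union> J ` X \<subseteq> {x. J x \<in> span (X \<union> J ` X)}" by (auto intro: span_base)
    qed
    thus ?thesis unfolding cspan_def by auto
  qed
  hence "J ` closure (cspan J X) \<subseteq> closure (cspan J X)"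
    using cstruct_linear[OF J] linear_continuous_on
    by (intro image_closure_subset) (auto intro: closure_subset[THEN subsetD])
  thus ?thesis unfolding csubspace_def using subspace_closure'[OF sub] by simp
qed

lemma closure_cspan_orth:
  assumes J: "cstruct J" and o: "\<And>s. s \<in> X \<Longrightarrow> inner v s = 0 \<and> inner v (J s) = 0"
    and y: "y \<in> closure (cspan J X)"
  shows "inner v y = 0"
proof -
  have "closure (cspan J X) \<subseteq> {s. inner v s = 0}"
  proof (rule closure_minimal)
    show "cspan J X \<subseteq> {s. inner v s = 0}" unfolding cspan_def
    proof (rule span_minimal)
      show "X \<union> J ` X \<subseteq> {s. inner v s = 0}" using o by auto
      show "subspace {s. inner v s = 0}" unfolding subspace_def by (simp add: inner_add_right)
    qed
    show "closed {s. inner v s = 0}"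
      by (rule closed_Collect_eq) (auto intro: continuous_intros)
  qed
  thus ?thesis using y by blast
qed

section \<open>Strong stability\<close>

lemma even_odd_tendsto:
  fixes X :: "nat \<Rightarrow> 'a::real_normed_vector"
  assumes e: "(\<lambda>n. X (2*n)) \<longlonglongrightarrow> 0" and o: "(\<lambda>n. X (2*n+1)) \<longlonglongrightarrow> 0"
  shows "X \<longlonglongrightarrow> 0"
proof (rule LIMSEQ_I)
  fix r :: real assume r: "r > 0"
  obtain N1 where N1: "\<And>n. n \<ge> N1 \<Longrightarrow> norm (X (2*n) - 0) < r" using LIMSEQ_D[OF e r] by blast
  obtain N2 where N2: "\<And>n. n \<ge> N2 \<Longrightarrow> norm (X (2*n+1) - 0) < r" using LIMSEQ_D[OF o r] by blast
  show "\<exists>no. \<forall>n\<ge>no. norm (X n - 0) < r"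
  proof (intro exI allI impI)
    fix n assume n: "n \<ge> 2 * (N1 + N2)"
    show "norm (X n - 0) < r"
    proof (cases "even n")
      case True then obtain m where "n = 2*m" by (auto elim: evenE)
      thus ?thesis using N1[of m] n by auto
    next
      case False then obtain m where "n = 2*m+1" by (auto elim: oddE)
      thus ?thesis using N2[of m] n by auto
    qed
  qed
qed

context scontr
begin

lemma strongly_stable_lemma:
  assumes strict: "\<forall>f. f \<noteq> 0 \<longrightarrow> norm (A f) < norm f"
  shows "(\<lambda>k. (A ^^ k) f) \<longlonglongrightarrow> 0"
proof -
  interpret bounded_linear A by (rule bl)
  define b where "b k = norm ((A ^^ k) f)^2" for k
  have bdec: "b (Suc k) \<le> b k" for k
    unfolding b_def using contr[of "(A ^^ k) f"] by (simp add: power_mono)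
  have b0: "b k \<ge> 0" for k by (simp add: b_def)
  have dec: "decseq b" using bdec by (simp add: decseq_SucI)
  have "\<forall>i. 0 \<le> b i" using b0 by blast
  then obtain L where bL: "b \<longlonglongrightarrow> L" and Lle': "\<forall>i. L \<le> b i"
    by (rule decseq_convergent[OF dec])
  have Lle: "L \<le> b k" for k using Lle' by blast
  define u where "u n = (A ^^ (2*n)) f" for n
  have shift: "inner ((A ^^ (p + r)) f) ((A ^^ q) f) = inner ((A ^^ p) f) ((A ^^ (q + r)) f)" for p q r
  proof (induction r arbitrary: p q)
    case 0 thus ?case by simp
  next
    case (Suc r)
    have "inner ((A ^^ (p + Suc r)) f) ((A ^^ q) f) = inner ((A ^^ (Suc p + r)) f) ((A ^^ q) f)" by simp
    also have "\<dots> = inner ((A ^^ Suc p) f) ((A ^^ (q + r)) f)" by (rule Suc)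
    also have "\<dots> = inner ((A ^^ p) f) ((A ^^ (q + Suc r)) f)" by (simp add: sym)
    finally show ?case .
  qed
  have inner_u1: "inner (u n) (u m) = b (n + m)" if "m \<le> n" for n m
  proof -
    have h1: "2 * n = (n + m) + (n - m)" "2 * m + (n - m) = n + m" using that by auto
    have "inner (u n) (u m) = inner ((A ^^ ((n + m) + (n - m))) f) ((A ^^ (2*m)) f)"
      unfolding u_def h1(1) ..
    also have "\<dots> = inner ((A ^^ (n + m)) f) ((A ^^ (2*m + (n - m))) f)" by (rule shift)
    finally have "inner (u n) (u m) = inner ((A ^^ (n + m)) f) ((A ^^ (2*m + (n - m))) f)" .
    also have "\<dots> = b (n + m)" using that by (simp add: b_def power2_norm_eq_inner) (simp add: add.commute)
    finally show ?thesis .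
  qed
  have inner_u: "inner (u n) (u m) = b (n + m)" for n m
  proof (cases "m \<le> n")
    case True thus ?thesis by (rule inner_u1)
  next
    case False
    hence "inner (u m) (u n) = b (m + n)" by (intro inner_u1) auto
    thus ?thesis by (simp add: inner_commute add.commute)
  qed
  have "Cauchy u"
  proof (rule metric_CauchyI)
    fix e :: real assume e: "e > 0"
    hence e2: "e^2/2 > 0" by simp
    obtain N where N: "\<And>n. n \<ge> N \<Longrightarrow> \<bar>b n - L\<bar> < e^2/2"
      using LIMSEQ_D[OF bL e2] by auto
    show "\<exists>M. \<forall>m\<ge>M. \<forall>n\<ge>M. dist (u m) (u n) < e"
    proof (intro exI allI impI)
      fix m n assume m: "m \<ge> N" and n: "n \<ge> N"
      have i1: "inner (u m) (u m) = b (2*m)" using inner_u[of m m] by (simp add: mult_2)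
      have i2: "inner (u n) (u n) = b (2*n)" using inner_u[of n n] by (simp add: mult_2)
      have i3: "inner (u m) (u n) = b (m + n)" by (rule inner_u)
      have i4: "inner (u n) (u m) = b (m + n)" using inner_u[of n m] by (simp add: add.commute)
      have "norm (u m - u n)^2 = inner (u m - u n) (u m - u n)" by (rule power2_norm_eq_inner)
      also have "\<dots> = inner (u m) (u m) - inner (u m) (u n) - (inner (u n) (u m) - inner (u n) (u n))"
        by (simp only: inner_diff_left inner_diff_right)
      also have "\<dots> = b (2*m) - 2 * b (m + n) + b (2*n)" unfolding i1 i2 i3 i4 by simp
      also have "\<dots> \<le> (b (2*m) - L) + (b (2*n) - L)" using Lle[of "m+n"] by simp
      also have "\<dots> < e^2/2 + e^2/2"
      proof -
        have "\<bar>b (2*m) - L\<bar> < e^2/2" using N[of "2*m"] m by simp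
        moreover have "\<bar>b (2*n) - L\<bar> < e^2/2" using N[of "2*n"] n by simp
        ultimately show ?thesis by linarith
      qed
      finally have "norm (u m - u n)^2 < e^2" by simp
      hence "norm (u m - u n) < e" by (rule power_less_imp_less_base) (use e in simp)
      thus "dist (u m) (u n) < e" by (simp add: dist_norm)
    qed
  qed
  then obtain g where ug: "u \<longlonglongrightarrow> g" using Cauchy_convergent_iff convergent_def by blast
  have l1: "(\<lambda>n. A (A (u n))) \<longlonglongrightarrow> A (A g)" by (intro tendsto ug)
  have l2: "(\<lambda>n. u (Suc n)) \<longlonglongrightarrow> g" using ug by (rule LIMSEQ_Suc)
  have "(\<lambda>n. A (A (u n))) = (\<lambda>n. u (Suc n))" by (rule ext) (simp add: u_def)
  hence l3: "(\<lambda>n. A (A (u n))) \<longlonglongrightarrow> g" using l2 by simp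
  have AAg: "A (A g) = g" by (rule LIMSEQ_unique[OF l1 l3])
  have g0: "g = 0"
  proof (rule ccontr)
    assume "g \<noteq> 0"
    hence "norm (A g) < norm g" using strict by blast
    moreover have "norm g \<le> norm (A g)" using contr[of "A g"] AAg by simp
    ultimately show False by simp
  qed
  have e: "(\<lambda>n. (A ^^ (2*n)) f) \<longlonglongrightarrow> 0" using ug g0 by (simp add: u_def[abs_def])
  have "(\<lambda>n. A ((A ^^ (2*n)) f)) \<longlonglongrightarrow> A 0" by (intro tendsto e)
  hence o: "(\<lambda>n. (A ^^ (2*n+1)) f) \<longlonglongrightarrow> 0" by simp
  show ?thesis by (rule even_odd_tendsto[OF e o])
qed

end

section \<open>Complex scalar multiplication\<close>

lemma csmul_bl: "cstruct J \<Longrightarrow> bounded_linear (csmul J z)"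
  unfolding csmul_def[abs_def]
  by (intro bounded_linear_add bounded_linear_scaleR_right bounded_linear_compose[OF bounded_linear_scaleR_right]
        cstruct_linear bounded_linear_ident)

lemma csmul_norm: "cstruct J \<Longrightarrow> norm (csmul J z x) = cmod z * norm x"
proof -
  assume J: "cstruct J"
  have "norm (csmul J z x)^2 = (Re z ^2 + Im z ^2) * norm x ^2"
    unfolding csmul_def power2_norm_eq_inner
    using cstruct_inner[OF J, of x x] cstruct_inner_self[OF J, of x]
    by (simp add: inner_add_left inner_add_right inner_commute power2_eq_square algebra_simps)
  also have "\<dots> = (cmod z * norm x)^2" by (simp add: cmod_def power_mult_distrib)
  finally show ?thesis by (simp add: power2_eq_iff_nonneg)
qed

lemma csmul_comm: "clinear_op J J L \<Longrightarrow> L (csmul J z x) = csmul J z (L x)"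
  unfolding csmul_def clinear_op_def
  by (auto simp: linear_add[OF bounded_linear.linear] linear_scale[OF bounded_linear.linear])

lemma csmul_in: "csubspace J S \<Longrightarrow> x \<in> S \<Longrightarrow> csmul J z x \<in> S"
  unfolding csmul_def csubspace_def by (auto intro!: subspace_add subspace_scale)

lemma neumann:
  fixes L :: "'a::{real_normed_vector,complete_space} \<Rightarrow> 'a"
  assumes L: "bounded_linear L" and q: "q < 1" and q0: "q \<ge> 0" and Lq: "\<And>x. norm (L x) \<le> q * norm x"
    and S: "subspace S" "closed S" "L ` S \<subseteq> S" and b: "b \<in> S"
  shows "\<exists>h\<in>S. h - L h = b"
proof -
  interpret bounded_linear L by (rule L)
  have nk: "norm ((L ^^ k) b) \<le> q^k * norm b" for k
  proof (induction k)
    case 0 thus ?case by simp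
  next
    case (Suc k)
    have "norm ((L ^^ Suc k) b) \<le> q * norm ((L ^^ k) b)" using Lq by simp
    also have "\<dots> \<le> q * (q^k * norm b)" using Suc q0 by (simp add: mult_left_mono)
    finally show ?case by simp
  qed
  have "summable (\<lambda>k. q^k)" by (rule summable_geometric) (use q q0 in simp)
  hence sg: "summable (\<lambda>k. q^k * norm b)" by (rule summable_mult2)
  have sm: "summable (\<lambda>k. (L ^^ k) b)" by (rule summable_comparison_complete[OF nk sg])
  define h where "h = (\<Sum>k. (L ^^ k) b)"
  have "L h = (\<Sum>k. L ((L ^^ k) b))" unfolding h_def by (rule suminf[OF sm])
  also have "\<dots> = (\<Sum>k. (L ^^ Suc k) b)" by simp
  also have "\<dots> = h - b" unfolding h_def using suminf_split_head[OF sm] by simp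
  finally have eq: "h - L h = b" by simp
  have k: "(L ^^ k) b \<in> S" for k by (induction k) (use b S(3) in auto)
  have "(\<lambda>n. \<Sum>k<n. (L ^^ k) b) \<longlonglongrightarrow> h" unfolding h_def by (rule summable_LIMSEQ[OF sm])
  moreover have "(\<Sum>k<n. (L ^^ k) b) \<in> S" for n by (intro subspace_sum[OF S(1)] k)
  ultimately have "h \<in> S" using closed_sequentially[OF S(2), of "\<lambda>n. \<Sum>k<n. (L ^^ k) b" h] by blast
  thus ?thesis using eq by blast
qed



lemma gens_sub: "x \<in> X \<Longrightarrow> x \<in> closure (cspan J X)"
  unfolding cspan_def by (meson UnI1 closure_subset span_base subsetD)

lemma iter_inv: "A ` S \<subseteq> S \<Longrightarrow> x \<in> S \<Longrightarrow> (A ^^ k) x \<in> S"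
  by (induction k) auto

theorem proposition4p2:
  fixes JN :: "'n::{real_inner,complete_space} \<Rightarrow> 'n"
    and JH :: "'h::{real_inner,complete_space} \<Rightarrow> 'h"
    and A :: "'h \<Rightarrow> 'h" and K :: "'h \<Rightarrow> 'n" and X :: "'n \<Rightarrow> 'n"
    and B :: "'n \<Rightarrow> 'h" and C :: "'h \<Rightarrow> 'n" and D :: "'n \<Rightarrow> 'n"
  assumes JN: "cstruct JN" and JH: "cstruct JH"
    and A_op: "clinear_op JH JH A"
    and A_sa: "\<forall>x y. cinner JH (A x) y = cinner JH x (A y)"
    and A_contr: "\<forall>x. norm (A x) \<le> norm x"
    and K_op: "clinear_op JH JN K"
    and K_dom: "\<forall>x. (\<forall>y\<in>defect_space JH JH A. cinner JH x y = 0) \<longrightarrow> K x = 0"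
    and K_contr: "\<forall>x\<in>defect_space JH JH A. norm (K x) \<le> norm x"
    and X_op: "clinear_op JN JN X"
    and X_dom: "X ` defect_space JN JH (adj JH JN K) \<subseteq> defect_space JN JH (adj JH JN K)"
    and X_contr: "\<forall>x\<in>defect_space JN JH (adj JH JN K). norm (X x) \<le> norm x"
    and B_def: "B = defect JH JH A \<circ> adj JH JN K"
    and C_def: "C = K \<circ> defect JH JH A"
    and D_def: "D = (\<lambda>n. - K (A (adj JH JN K n))
                     + defect JN JH (adj JH JN K) (X (defect JN JH (adj JH JN K) n)))"
    and pqs: "pqs_system JN JH UNIV D C B A"
  shows "let Hs = closure (cspan JH (\<Union>k. (A ^^ k) ` range (adj JH JN K))) in
           pqs_system JN JH Hs D C B A \<and> minimal_system JN JH Hs D C B A \<and>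
           (\<forall>z. norm z < 1 \<longrightarrow> transfer JN JH Hs D C B A z = transfer JN JH UNIV D C B A z) \<and>
           (minimal_system JN JH UNIV D C B A \<longleftrightarrow>
              (\<forall>f. f \<noteq> 0 \<longrightarrow> norm (A f) < norm f) \<and> Hs = UNIV) \<and>
           (minimal_system JN JH UNIV D C B A \<longrightarrow>
              strongly_stable UNIV A \<and> strongly_costable JN JH UNIV C A)"
proof -
  have bA: "bounded_linear A" and AJ: "\<And>x. A (JH x) = JH (A x)" using A_op by (auto simp: clinear_op_def)
  have sc: "scontr A" and DA: "defect JH JH A = Rsq A" and clR: "clinear_op JH JH (Rsq A)"
    using defect_is_Rsq[OF JH A_op A_sa A_contr] by auto
  interpret scontr A by (rule sc)
  define R where "R = Rsq A"
  have bR: "bounded_linear R" and RJ: "\<And>x. R (JH x) = JH (R x)"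
    using clR by (auto simp: clinear_op_def R_def)
  have Rsy: "\<And>x y. inner (R x) y = inner x (R y)" by (simp add: R_def Rsq_sym)
  have RAk: "\<And>x k. R ((A ^^ k) x) = (A ^^ k) (R x)"
    unfolding R_def by (rule Rsq_comm[OF blk, symmetric]) (simp add: funpow_swap1)
  have RR: "\<And>x. R (R x) = x - A (A x)" by (simp add: R_def Rsq_sq)
  define Ks where "Ks = adj JH JN K"
  have Ks: "clinear_op JN JH Ks" "\<And>x y. inner (K x) y = inner x (Ks y)"
    using adj_exists[OF JH JN K_op] by (auto simp: Ks_def)
  have Bn: "\<And>n. B n = R (Ks n)" by (simp add: B_def DA R_def Ks_def)
  define GH where "GH = (\<Union>k. (A ^^ k) ` range Ks)"
  define Hs where "Hs = closure (cspan JH GH)"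
  define GB where "GB = (\<Union>k. (A ^^ k) ` range B)"
  define V where "V = closure (cspan JH GB)"
  define M where "M = defect_space JH JH A"
  have M_eq: "M = closure (range R)" by (simp add: M_def defect_space_def DA R_def)
  have cHs: "csubspace JH Hs" unfolding Hs_def by (rule csubspace_closure_cspan[OF JH])
  hence Hs_sub: "subspace Hs" and Hs_cl: "closed Hs" and Hs_J: "JH ` Hs \<subseteq> Hs"
    by (auto simp: csubspace_def)
  have cV: "csubspace JH V" unfolding V_def by (rule csubspace_closure_cspan[OF JH])
  hence V_sub: "subspace V" and V_cl: "closed V" and V_J: "JH ` V \<subseteq> V"
    by (auto simp: csubspace_def)
  have GH_Hs: "GH \<subseteq> Hs" unfolding Hs_def using gens_sub by blast
  have GB_V: "GB \<subseteq> V" unfolding V_def using gens_sub by blast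
  have AHs: "A ` Hs \<subseteq> Hs" unfolding Hs_def
  proof (rule op_image_closure_cspan[OF JH bA AJ])
    show "subspace (closure (cspan JH GH))" "closed (closure (cspan JH GH))"
      "JH ` closure (cspan JH GH) \<subseteq> closure (cspan JH GH)"
      using Hs_sub Hs_cl Hs_J by (auto simp: Hs_def)
    have "A ` GH \<subseteq> GH" unfolding GH_def
    proof
      fix y assume "y \<in> A ` (\<Union>k. (A ^^ k) ` range Ks)"
      then obtain k n where "y = A ((A ^^ k) (Ks n))" by auto
      hence "y = (A ^^ Suc k) (Ks n)" by simp
      thus "y \<in> (\<Union>k. (A ^^ k) ` range Ks)" by blast
    qed
    thus "A ` GH \<subseteq> closure (cspan JH GH)" using GH_Hs by (auto simp: Hs_def)
  qed
  have AV: "A ` V \<subseteq> V" unfolding V_def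
  proof (rule op_image_closure_cspan[OF JH bA AJ])
    show "subspace (closure (cspan JH GB))" "closed (closure (cspan JH GB))"
      "JH ` closure (cspan JH GB) \<subseteq> closure (cspan JH GB)"
      using V_sub V_cl V_J by (auto simp: V_def)
    have "A ` GB \<subseteq> GB" unfolding GB_def
    proof
      fix y assume "y \<in> A ` (\<Union>k. (A ^^ k) ` range B)"
      then obtain k n where "y = A ((A ^^ k) (B n))" by auto
      hence "y = (A ^^ Suc k) (B n)" by simp
      thus "y \<in> (\<Union>k. (A ^^ k) ` range B)" by blast
    qed
    thus "A ` GB \<subseteq> closure (cspan JH GB)" using GB_V by (auto simp: V_def)
  qed
  have RHs: "\<And>x. x \<in> Hs \<Longrightarrow> R x \<in> Hs"
    unfolding R_def by (rule Rsq_invariant[OF Hs_sub Hs_cl AHs])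
  have KsHs: "\<And>n. Ks n \<in> Hs" using GH_Hs unfolding GH_def
    by (metis (no_types, lifting) UNIV_I UN_I funpow_0 image_eqI subsetD)
  have BHs: "range B \<subseteq> Hs" using RHs KsHs Bn by auto
  have GB_Hs: "GB \<subseteq> Hs" unfolding GB_def using BHs iter_inv[OF AHs] by blast
  have V_Hs: "V \<subseteq> Hs" unfolding V_def by (rule closure_cspan_sub[OF Hs_sub Hs_cl Hs_J GB_Hs])
  have rR_sub: "subspace (range R)"
  proof -
    interpret bR: bounded_linear R by (rule bR)
    show ?thesis unfolding subspace_def
    proof (intro conjI ballI allI)
      show "0 \<in> range R" using bR.zero by (metis rangeI)
    next
      fix x y assume "x \<in> range R" "y \<in> range R"
      then obtain a b where "x = R a" "y = R b" by auto
      hence "x + y = R (a + b)" by (simp add: bR.add)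
      thus "x + y \<in> range R" by simp
    next
      fix c :: real and x assume "x \<in> range R"
      then obtain a where "x = R a" by auto
      hence "c *\<^sub>R x = R (c *\<^sub>R a)" by (simp add: bR.scaleR)
      thus "c *\<^sub>R x \<in> range R" by simp
    qed
  qed
  have M_sub: "subspace M" unfolding M_eq by (rule subspace_closure'[OF rR_sub])
  have M_cl: "closed M" unfolding M_eq by simp
  have M_J: "JH ` M \<subseteq> M" unfolding M_eq
  proof (rule image_closure_subset)
    show "continuous_on (closure (range R)) JH" using cstruct_linear[OF JH] linear_continuous_on by blast
    show "closed (closure (range R))" by simp
    show "JH ` range R \<subseteq> closure (range R)"
    proof
      fix y assume "y \<in> JH ` range R"
      then obtain a where "y = JH (R a)" by auto
      hence "y = R (JH a)" by (simp add: RJ)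
      hence "y \<in> range R" by simp
      thus "y \<in> closure (range R)" by (rule closure_subset[THEN subsetD])
    qed
  qed
  have GB_M: "GB \<subseteq> M"
  proof
    fix y assume "y \<in> GB"
    then obtain k n where "y = (A ^^ k) (B n)" unfolding GB_def by auto
    hence "y = R ((A ^^ k) (Ks n))" by (simp add: Bn RAk)
    hence "y \<in> range R" by simp
    thus "y \<in> M" unfolding M_eq by (rule closure_subset[THEN subsetD])
  qed
  have V_M: "V \<subseteq> M" unfolding V_def by (rule closure_cspan_sub[OF M_sub M_cl M_J GB_M])
  have KsM: "\<And>n. Ks n \<in> M"
  proof (rule orth_orth_in[OF M_sub M_cl])
    fix n y assume o: "\<forall>m\<in>M. inner y m = 0"
    have "\<forall>m\<in>M. cinner JH y m = 0"
    proof
      fix m assume "m \<in> M"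
      moreover hence "JH m \<in> M" using M_J by blast
      ultimately show "cinner JH y m = 0" using o by (simp add: cinner_def complex_eq_iff)
    qed
    hence "K y = 0" using K_dom unfolding M_def by blast
    thus "inner (Ks n) y = 0" using Ks(2)[of y n] by (simp add: inner_commute)
  qed
  have KsV: "\<And>n. Ks n \<in> V"
  proof -
    fix n
    obtain m where mV: "m \<in> V" and o: "\<forall>v\<in>V. inner (Ks n - m) v = 0"
      using projection_exists[OF V_sub V_cl] by blast
    define g where "g = Ks n - m"
    have gHs: "g \<in> Hs" unfolding g_def using KsHs mV V_Hs Hs_sub by (auto intro: subspace_diff)
    have gM: "g \<in> M" unfolding g_def using KsM mV V_M M_sub by (auto intro: subspace_diff)
    have "\<forall>h\<in>Hs. inner (R g) h = 0" unfolding Hs_def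
    proof (intro ballI closure_cspan_orth[OF JH])
      fix h s assume "s \<in> GH"
      then obtain k n' where s: "s = (A ^^ k) (Ks n')" unfolding GH_def by auto
      have Rs: "R s = (A ^^ k) (B n')" by (simp add: s RAk Bn)
      have inV: "(A ^^ k) (B n') \<in> V" using GB_V unfolding GB_def by blast
      have "inner (R g) s = inner g (R s)" by (rule Rsy)
      also have "\<dots> = 0" using o inV by (simp add: Rs g_def)
      finally have 1: "inner (R g) s = 0" .
      have "inner (R g) (JH s) = inner g (JH (R s))" by (simp add: Rsy RJ)
      also have "\<dots> = 0" using o inV V_J by (simp add: Rs g_def image_subset_iff)
      finally show "inner (R g) s = 0 \<and> inner (R g) (JH s) = 0" using 1 by simp
    qed
    hence "inner (R g) (R g) = 0" using RHs[OF gHs] by blast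
    hence Rg: "R g = 0" by simp
    have "closure (range R) \<subseteq> {s. inner g s = 0}"
    proof (rule closure_minimal)
      show "range R \<subseteq> {s. inner g s = 0}" using Rsy Rg by (auto simp flip: Rsy)
      show "closed {s. inner g s = 0}" by (rule closed_Collect_eq) (auto intro: continuous_intros)
    qed
    hence "inner g g = 0" using gM M_eq by blast
    hence "g = 0" by simp
    thus "Ks n \<in> V" using mV by (simp add: g_def)
  qed
  have GH_V: "GH \<subseteq> V" unfolding GH_def using KsV iter_inv[OF AV] by blast
  have Hs_V: "Hs \<subseteq> V" unfolding Hs_def by (rule closure_cspan_sub[OF V_sub V_cl V_J GH_V])
  have HsV: "V = Hs" using Hs_V V_Hs by blast
  have isU: "is_system JN JH UNIV D C B A" using pqs by (simp add: pqs_system_def)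
  have ops: "clinear_op JN JN D" "clinear_op JH JN C" "clinear_op JN JH B" "clinear_op JH JH A"
    using isU by (auto simp: is_system_def)
  have contrT: "\<forall>n. \<forall>h. norm (D n + C h, B n + A h) \<le> norm (n, h)" using pqs by (simp add: pqs_system_def)
  have CB: "\<forall>h n. cinner JN (C h) n = cinner JH h (B n)" using pqs by (simp add: pqs_system_def)
  have pqsHs: "pqs_system JN JH Hs D C B A"
    unfolding pqs_system_def is_system_def using cHs ops BHs AHs contrT CB A_sa by auto
  have stadj: "\<And>S. A ` S \<subseteq> S \<Longrightarrow> range B \<subseteq> S \<Longrightarrow> state_adjoints JN JH S C A B A"
    unfolding state_adjoints_def using CB A_sa by auto
  have GBV: "closure (cspan JH (\<Union>k. (A ^^ k) ` range B)) = V" by (simp add: V_def GB_def)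
  have minHs: "minimal_system JN JH Hs D C B A"
    unfolding minimal_system_def using GBV HsV stadj[OF AHs BHs] by blast
  have trans: "\<forall>z. norm z < 1 \<longrightarrow> transfer JN JH Hs D C B A z = transfer JN JH UNIV D C B A z"
  proof (intro allI impI)
    fix z :: complex assume z: "norm z < 1"
    show "transfer JN JH Hs D C B A z = transfer JN JH UNIV D C B A z"
    proof
      fix n
      define L where "L h = csmul JH z (A h)" for h
      have bL: "bounded_linear L" unfolding L_def[abs_def]
        by (rule bounded_linear_compose[OF csmul_bl[OF JH] bA])
      have nL: "norm (L h) \<le> cmod z * norm h" for h
        unfolding L_def csmul_norm[OF JH] using A_contr by (simp add: mult_left_mono)
      have LHs: "L ` Hs \<subseteq> Hs" unfolding L_def using AHs csmul_in[OF cHs] by auto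
      obtain h where hHs: "h \<in> Hs" and hL: "h - L h = B n"
        using neumann[OF bL _ _ nL Hs_sub Hs_cl LHs, of "B n"] z BHs by auto
      have uniq: "h' = h" if "h' - L h' = B n" for h'
      proof -
        have "(h' - h) - L (h' - h) = (h' - L h') - (h - L h)"
          by (simp add: linear_diff[OF bounded_linear.linear[OF bL]])
        also have "\<dots> = 0" using that hL by simp
        finally have "(h' - h) - L (h' - h) = 0" .
        hence "norm (h' - h) = norm (L (h' - h))" by (simp add: eq_iff_diff_eq_0[symmetric])
        also have "\<dots> \<le> cmod z * norm (h' - h)" by (rule nL)
        finally have "(1 - cmod z) * norm (h' - h) \<le> 0" by (simp add: algebra_simps)
        moreover have "1 - cmod z > 0" using z by simp
        ultimately have "norm (h' - h) \<le> 0" by (simp add: mult_le_0_iff)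
        thus ?thesis by simp
      qed
      have t1: "(THE h. h \<in> Hs \<and> h - csmul JH z (A h) = B n) = h"
      proof (rule the_equality)
        show "h \<in> Hs \<and> h - csmul JH z (A h) = B n" using hHs hL by (simp add: L_def)
        fix x assume "x \<in> Hs \<and> x - csmul JH z (A x) = B n"
        thus "x = h" using uniq[of x] by (simp add: L_def)
      qed
      have t2: "(THE h. h \<in> UNIV \<and> h - csmul JH z (A h) = B n) = h"
      proof (rule the_equality)
        show "h \<in> UNIV \<and> h - csmul JH z (A h) = B n" using hL by (simp add: L_def)
        fix x assume "x \<in> UNIV \<and> x - csmul JH z (A x) = B n"
        thus "x = h" using uniq[of x] by (simp add: L_def)
      qed
      show "transfer JN JH Hs D C B A z n = transfer JN JH UNIV D C B A z n"
        unfolding transfer_def t1 t2 ..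
    qed
  qed
  have strict_of: "\<forall>f. f \<noteq> 0 \<longrightarrow> norm (A f) < norm f" if VU: "V = UNIV"
  proof (intro allI impI)
    fix f :: 'h assume f: "f \<noteq> 0"
    show "norm (A f) < norm f"
    proof (rule ccontr)
      assume "\<not> norm (A f) < norm f"
      hence eqn: "norm (A f) = norm f" using A_contr by (meson linorder_not_le order_antisym)
      have "inner (R f) (R f) = inner (R (R f)) f" by (rule Rsy[symmetric])
      also have "\<dots> = inner f f - inner (A (A f)) f" by (simp add: RR inner_diff_left)
      also have "inner (A (A f)) f = inner (A f) (A f)" by (rule sym)
      also have "inner (A f) (A f) = inner f f" using eqn by (simp add: power2_norm_eq_inner[symmetric])
      finally have "R f = 0" by simp
      have "closure (range R) \<subseteq> {s. inner f s = 0}"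
      proof (rule closure_minimal)
        show "range R \<subseteq> {s. inner f s = 0}" using Rsy \<open>R f = 0\<close> by (auto simp flip: Rsy)
        show "closed {s. inner f s = 0}" by (rule closed_Collect_eq) (auto intro: continuous_intros)
      qed
      moreover have "f \<in> closure (range R)" using VU V_M M_eq by blast
      ultimately have "inner f f = 0" by blast
      thus False using f by simp
    qed
  qed
  have minU: "minimal_system JN JH UNIV D C B A \<longleftrightarrow> (\<forall>f. f \<noteq> 0 \<longrightarrow> norm (A f) < norm f) \<and> Hs = UNIV"
  proof
    assume "minimal_system JN JH UNIV D C B A"
    hence VU: "V = UNIV" using GBV by (simp add: minimal_system_def)
    show "(\<forall>f. f \<noteq> 0 \<longrightarrow> norm (A f) < norm f) \<and> Hs = UNIV" using strict_of[OF VU] VU HsV by simp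
  next
    assume "(\<forall>f. f \<noteq> 0 \<longrightarrow> norm (A f) < norm f) \<and> Hs = UNIV"
    hence VU: "V = UNIV" using HsV by simp
    show "minimal_system JN JH UNIV D C B A"
      unfolding minimal_system_def using GBV VU stadj[of UNIV] by auto
  qed
  have stab: "minimal_system JN JH UNIV D C B A \<longrightarrow> strongly_stable UNIV A \<and> strongly_costable JN JH UNIV C A"
  proof
    assume "minimal_system JN JH UNIV D C B A"
    hence VU: "V = UNIV" using GBV by (simp add: minimal_system_def)
    have lim: "\<And>f. (\<lambda>k. (A ^^ k) f) \<longlonglongrightarrow> 0" by (rule strongly_stable_lemma[OF strict_of[OF VU]])
    show "strongly_stable UNIV A \<and> strongly_costable JN JH UNIV C A"
      unfolding strongly_stable_def strongly_costable_def using lim stadj[of UNIV] by auto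
  qed
  have main: "pqs_system JN JH Hs D C B A \<and> minimal_system JN JH Hs D C B A \<and>
           (\<forall>z. norm z < 1 \<longrightarrow> transfer JN JH Hs D C B A z = transfer JN JH UNIV D C B A z) \<and>
           (minimal_system JN JH UNIV D C B A \<longleftrightarrow>
              (\<forall>f. f \<noteq> 0 \<longrightarrow> norm (A f) < norm f) \<and> Hs = UNIV) \<and>
           (minimal_system JN JH UNIV D C B A \<longrightarrow>
              strongly_stable UNIV A \<and> strongly_costable JN JH UNIV C A)"
    using pqsHs minHs trans minU stab by blast
  show ?thesis unfolding Let_def using main by (simp add: Hs_def GH_def Ks_def)
qed


end
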